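(* Assume the standing assumptions in the context with case (CI) (so $\alpha=0$ and $\widetilde w=w$). Assume moreover that every $k_{n,j}$ is continuously differentiable and that for every $t'\in(0,T)$ there exists $\tilde c(t')>0$ with $|k_{n,j}'(t)|\le\tilde c(t')\,w_nw_j/w_{n+j}$ for all $n,j\in\mathbb N$ and $t\in[0,t']$. Let $\mathring u\in\mathcal D(G^{(w)})$ with $\mathring u\ge0$, and let $u$ be the unique (maximal) mild solution of $u'(t)=G^{(w)}u(t)+K(t,u(t))$, $u(0)=\mathring u$. Then $u$ is also a classical solution of this problem.
   Context: Let $0<T\le\infty$, $a_n\ge0$, $b_{n,j}\ge0$ with $b_{n,j}=0$ for $j\le n$, $k_{n,j}:[0,T)\to[0,\infty)$ continuous with $k_{n,j}=k_{j,n}$. For a positive sequence $v$, $\ell^1_v=\{f:\|f\|_v=\sum v_n|f_n|<\infty\}$ with componentwise order. Weight $w$: $w_n\ge n$, monotone increasing, and $\sum_{n=1}^{j-1}w_nb_{n,j}\le\kappa w_j$ for $j\ge2$ for some $\kappa\in(0,1]$. Case (CI): for every $t'\in(0,T)$ there is $c(t')>0$ with $k_{n,j}(t)\le c(t')w_nw_j/w_{n+j}$ for $t\in[0,t']$. $G^{(w)}$ is the closure in $\ell^1_w$ of $A^{(w)}+B^{(w)}$ where $A^{(w)}f=(-a_nf_n)_n$ and $B^{(w)}f=(\sum_{j>n}a_jb_{n,j}f_j)_n$ on maximal domains; it generates a substochastic $C_0$-semigroup $(S^{(w)}(t))_{t\ge 0}$ on $\ell^1_w$. $K(t,f)=(\tfrac12\sum_{j=1}^{n-1}k_{n-j,j}(t)f_{n-j}f_j-\sum_{j\ge1}k_{n,j}(t)f_nf_j)_n$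 for $f\in\ell^1_w$. A mild solution on $[0,t_1)$ is $u\in C([0,t_1),\ell^1_w)$ with $u(t)=S^{(w)}(t)\mathring u+\int_0^tS^{(w)}(t-s)K(s,u(s))\,ds$; the maximal mild solution exists and is unique on some $[0,t_{\max})$. A classical solution on $[0,t_1)$ is $u:[0,t_1)\to\ell^1_w$ continuous, continuously differentiable on $(0,t_1)$, with $u(t)\in\mathcal D(G^{(w)})$ and $u'(t)=G^{(w)}u(t)+K(t,u(t))$ for $t\in(0,t_1)$, and $u(0)=\mathring u$. *)

theory Defs
  imports "HOL-Analysis.Analysis"
begin

text \<open>Sequences are modelled as functions nat => real; index 0 is unused
  (elements of the weighted space are required to vanish at 0).\<close>

definition lw :: "(nat \<Rightarrow> real) \<Rightarrow> (nat \<Rightarrow> real) set" where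
  "lw w = {f. f 0 = 0 \<and> summable (\<lambda>n. w n * \<bar>f n\<bar>)}"

definition wnorm :: "(nat \<Rightarrow> real) \<Rightarrow> (nat \<Rightarrow> real) \<Rightarrow> real" where
  "wnorm w f = (\<Sum>n. w n * \<bar>f n\<bar>)"

definition lw_tendsto :: "(nat \<Rightarrow> real) \<Rightarrow> ('a \<Rightarrow> nat \<Rightarrow> real) \<Rightarrow> (nat \<Rightarrow> real) \<Rightarrow> 'a filter \<Rightarrow> bool" where
  "lw_tendsto w F g L \<longleftrightarrow> ((\<lambda>x. wnorm w (\<lambda>n. F x n - g n)) \<longlongrightarrow> 0) L"

definition opA :: "(nat \<Rightarrow> real) \<Rightarrow> (nat \<Rightarrow> real) \<Rightarrow> nat \<Rightarrow> real" where
  "opA a f = (\<lambda>n. if n = 0 then 0 else - a n * f n)"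

definition opB :: "(nat \<Rightarrow> real) \<Rightarrow> (nat \<Rightarrow> nat \<Rightarrow> real) \<Rightarrow> (nat \<Rightarrow> real) \<Rightarrow> nat \<Rightarrow> real" where
  "opB a b f = (\<lambda>n. if n = 0 then 0 else (\<Sum>j. if n < j then a j * b n j * f j else 0))"

definition domA :: "(nat \<Rightarrow> real) \<Rightarrow> (nat \<Rightarrow> real) \<Rightarrow> (nat \<Rightarrow> real) set" where
  "domA w a = {f \<in> lw w. opA a f \<in> lw w}"

definition domB :: "(nat \<Rightarrow> real) \<Rightarrow> (nat \<Rightarrow> real) \<Rightarrow> (nat \<Rightarrow> nat \<Rightarrow> real) \<Rightarrow> (nat \<Rightarrow> real) set" where
  "domB w a b = {f \<in> lw w. (\<forall>n\<ge>1. summable (\<lambda>j. if n < j then a j * b n j * f j else 0))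
                            \<and> opB a b f \<in> lw w}"

text \<open>Graph of G = closure of A + B (defined on D(A) \<inter> D(B)) in the weighted space.\<close>
definition graphG :: "(nat \<Rightarrow> real) \<Rightarrow> (nat \<Rightarrow> real) \<Rightarrow> (nat \<Rightarrow> nat \<Rightarrow> real)
    \<Rightarrow> ((nat \<Rightarrow> real) \<times> (nat \<Rightarrow> real)) set" where
  "graphG w a b = {(f, g). f \<in> lw w \<and> g \<in> lw w \<and>
      (\<exists>F :: nat \<Rightarrow> nat \<Rightarrow> real. (\<forall>m. F m \<in> domA w a \<inter> domB w a b) \<and>
         lw_tendsto w F f sequentially \<and>
         lw_tendsto w (\<lambda>m n. opA a (F m) n + opB a b (F m) n) g sequentially)}"

definition domG :: "(nat \<Rightarrow> real) \<Rightarrow> (nat \<Rightarrow> real) \<Rightarrow> (nat \<Rightarrow> nat \<Rightarrow> real) \<Rightarrow> (nat \<Rightarrow> real) set" where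
  "domG w a b = {f. \<exists>g. (f, g) \<in> graphG w a b}"

definition C0_semigroup_gen :: "(nat \<Rightarrow> real) \<Rightarrow> (real \<Rightarrow> (nat \<Rightarrow> real) \<Rightarrow> nat \<Rightarrow> real)
    \<Rightarrow> ((nat \<Rightarrow> real) \<times> (nat \<Rightarrow> real)) set \<Rightarrow> bool" where
  "C0_semigroup_gen w S P \<longleftrightarrow>
     (\<forall>t\<ge>0. \<forall>f\<in>lw w. S t f \<in> lw w) \<and>
     (\<forall>t\<ge>0. \<forall>f\<in>lw w. \<forall>g\<in>lw w. \<forall>c d. S t (\<lambda>n. c * f n + d * g n) = (\<lambda>n. c * S t f n + d * S t g n)) \<and>
     (\<forall>t\<ge>0. \<exists>M. \<forall>f\<in>lw w. wnorm w (S t f) \<le> M * wnorm w f) \<and>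
     (\<forall>f\<in>lw w. S 0 f = f) \<and>
     (\<forall>t\<ge>0. \<forall>s\<ge>0. \<forall>f\<in>lw w. S (t + s) f = S t (S s f)) \<and>
     (\<forall>f\<in>lw w. \<forall>t\<ge>0. lw_tendsto w (\<lambda>s. S s f) (S t f) (at t within {0..})) \<and>
     (\<forall>f\<in>lw w. \<forall>g\<in>lw w. (f, g) \<in> P \<longleftrightarrow>
          lw_tendsto w (\<lambda>h n. (S h f n - f n) / h) g (at_right 0))"

definition opK :: "(nat \<Rightarrow> nat \<Rightarrow> real \<Rightarrow> real) \<Rightarrow> real \<Rightarrow> (nat \<Rightarrow> real) \<Rightarrow> nat \<Rightarrow> real" where
  "opK k t f = (\<lambda>n. if n = 0 then 0 else
      (1/2) * (\<Sum>j\<in>{1..<n}. k (n - j) j t * f (n - j) * f j)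
      - (\<Sum>j. k n (Suc j) t * f n * f (Suc j)))"

text \<open>Mild solution on [0,t1): the ell^1_w-valued integral is taken componentwise
  (the integrand is continuous, so this agrees with the Bochner integral).\<close>
definition mild_solution :: "(nat \<Rightarrow> real) \<Rightarrow> (real \<Rightarrow> (nat \<Rightarrow> real) \<Rightarrow> nat \<Rightarrow> real)
    \<Rightarrow> (nat \<Rightarrow> nat \<Rightarrow> real \<Rightarrow> real) \<Rightarrow> (nat \<Rightarrow> real) \<Rightarrow> ereal \<Rightarrow> (real \<Rightarrow> nat \<Rightarrow> real) \<Rightarrow> bool" where
  "mild_solution w S k u0 t1 u \<longleftrightarrow>
     (\<forall>t. 0 \<le> t \<and> ereal t < t1 \<longrightarrow> u t \<in> lw w) \<and>
     (\<forall>t0. 0 \<le> t0 \<and> ereal t0 < t1 \<longrightarrow> lw_tendsto w u (u t0) (at t0 within {t. 0 \<le> t \<and> ereal t < t1})) \<and>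
     (\<forall>t. 0 \<le> t \<and> ereal t < t1 \<longrightarrow>
        (\<forall>n. u t n = S t u0 n + integral {0..t} (\<lambda>s. S (t - s) (opK k s (u s)) n)))"

definition classical_solution :: "(nat \<Rightarrow> real) \<Rightarrow> (nat \<Rightarrow> real) \<Rightarrow> (nat \<Rightarrow> nat \<Rightarrow> real)
    \<Rightarrow> (nat \<Rightarrow> nat \<Rightarrow> real \<Rightarrow> real) \<Rightarrow> (nat \<Rightarrow> real) \<Rightarrow> ereal \<Rightarrow> (real \<Rightarrow> nat \<Rightarrow> real) \<Rightarrow> bool" where
  "classical_solution w a b k u0 t1 u \<longleftrightarrow>
     (\<forall>t. 0 \<le> t \<and> ereal t < t1 \<longrightarrow> u t \<in> lw w) \<and>
     (\<forall>t0. 0 \<le> t0 \<and> ereal t0 < t1 \<longrightarrow> lw_tendsto w u (u t0) (at t0 within {t. 0 \<le> t \<and> ereal t < t1})) \<and>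
     (\<exists>u' :: real \<Rightarrow> nat \<Rightarrow> real.
        (\<forall>t. 0 < t \<and> ereal t < t1 \<longrightarrow>
            u' t \<in> lw w \<and>
            lw_tendsto w (\<lambda>h n. (u (t + h) n - u t n) / h) (u' t) (at 0) \<and>
            lw_tendsto w u' (u' t) (at t within {s. 0 < s \<and> ereal s < t1}) \<and>
            u t \<in> domG w a b \<and>
            (u t, (\<lambda>n. u' t n - opK k t (u t) n)) \<in> graphG w a b)) \<and>
     u 0 = u0"

end

theory Submission
  imports Defs
begin

typedef l1 = "{f::nat\<Rightarrow>real. f 0 = 0 \<and> summable (\<lambda>n. \<bar>f n\<bar>)}"
  morphisms cf Abs_l1
  by (rule exI[of _ "\<lambda>_. 0"]) auto

setup_lifting type_definition_l1

lemma cf_0[simp]: "cf x 0 = 0" using cf by auto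
lemma cf_summable: "summable (\<lambda>n. \<bar>cf x n\<bar>)" using cf by auto
lemma cf_eqI: "(\<And>n. cf x n = cf y n) \<Longrightarrow> x = y" by (metis cf_inject ext)

instantiation l1 :: real_vector
begin
lift_definition zero_l1 :: l1 is "\<lambda>_. 0" by auto
lift_definition plus_l1 :: "l1 \<Rightarrow> l1 \<Rightarrow> l1" is "\<lambda>f g n. f n + g n"
proof safe
  fix f g :: "nat \<Rightarrow> real" assume "summable (\<lambda>n. \<bar>f n\<bar>)" "summable (\<lambda>n. \<bar>g n\<bar>)"
  then have "summable (\<lambda>n. \<bar>f n\<bar> + \<bar>g n\<bar>)" by (rule summable_add)
  then show "summable (\<lambda>n. \<bar>f n + g n\<bar>)"
    by (rule summable_comparison_test[rotated]) auto
qed auto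
lift_definition uminus_l1 :: "l1 \<Rightarrow> l1" is "\<lambda>f n. - f n" by auto
lift_definition minus_l1 :: "l1 \<Rightarrow> l1 \<Rightarrow> l1" is "\<lambda>f g n. f n - g n"
proof safe
  fix f g :: "nat \<Rightarrow> real" assume "summable (\<lambda>n. \<bar>f n\<bar>)" "summable (\<lambda>n. \<bar>g n\<bar>)"
  then have "summable (\<lambda>n. \<bar>f n\<bar> + \<bar>g n\<bar>)" by (rule summable_add)
  then show "summable (\<lambda>n. \<bar>f n - g n\<bar>)"
    by (rule summable_comparison_test[rotated]) auto
qed auto
lift_definition scaleR_l1 :: "real \<Rightarrow> l1 \<Rightarrow> l1" is "\<lambda>c f n. c * f n"
proof safe
  fix c and f :: "nat \<Rightarrow> real" assume "summable (\<lambda>n. \<bar>f n\<bar>)"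
  then have "summable (\<lambda>n. \<bar>c\<bar> * \<bar>f n\<bar>)" by (rule summable_mult)
  then show "summable (\<lambda>n. \<bar>c * f n\<bar>)" by (simp add: abs_mult)
qed auto
instance
  by standard (transfer; auto simp: algebra_simps)+
end

lemma cf_add[simp]: "cf (x + y) n = cf x n + cf y n" by transfer simp
lemma cf_diff[simp]: "cf (x - y) n = cf x n - cf y n" by transfer simp
lemma cf_minus[simp]: "cf (- x) n = - cf x n" by transfer simp
lemma cf_scaleR[simp]: "cf (c *\<^sub>R x) n = c * cf x n" by transfer simp
lemma cf_zero[simp]: "cf 0 n = 0" by transfer simp

instantiation l1 :: real_normed_vector
begin
definition norm_l1 :: "l1 \<Rightarrow> real" where "norm_l1 x = (\<Sum>n. \<bar>cf x n\<bar>)"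
definition sgn_l1 :: "l1 \<Rightarrow> l1" where "sgn_l1 x = x /\<^sub>R norm x"
definition dist_l1 :: "l1 \<Rightarrow> l1 \<Rightarrow> real" where "dist_l1 x y = norm (x - y)"
definition uniformity_l1 :: "(l1 \<times> l1) filter"
  where "uniformity_l1 = (INF e\<in>{0 <..}. principal {(x, y). dist x y < e})"
definition open_l1 :: "l1 set \<Rightarrow> bool"
  where "open_l1 S = (\<forall>x\<in>S. \<forall>\<^sub>F (x', y) in uniformity. x' = x \<longrightarrow> y \<in> S)"
instance
proof
  fix x y :: l1 and a :: real
  show "norm x = 0 \<longleftrightarrow> x = 0"
  proof
    assume "norm x = 0"
    then have "\<forall>n. \<bar>cf x n\<bar> = 0"
      using suminf_eq_zero_iff[OF cf_summable] by (simp add: norm_l1_def)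
    then show "x = 0" by (intro cf_eqI) simp
  qed (simp add: norm_l1_def)
  show "norm (x + y) \<le> norm x + norm y"
  proof -
    have s: "summable (\<lambda>n. \<bar>cf (x+y) n\<bar>)" "summable (\<lambda>n. \<bar>cf x n\<bar> + \<bar>cf y n\<bar>)"
      using cf_summable summable_add by blast+
    have "(\<Sum>n. \<bar>cf (x+y) n\<bar>) \<le> (\<Sum>n. \<bar>cf x n\<bar> + \<bar>cf y n\<bar>)"
      by (rule suminf_le[OF _ s]) simp
    also have "\<dots> = norm x + norm y"
      unfolding norm_l1_def by (rule suminf_add[OF cf_summable cf_summable, symmetric])
    finally show ?thesis by (simp add: norm_l1_def)
  qed
  show "norm (a *\<^sub>R x) = \<bar>a\<bar> * norm x"
    unfolding norm_l1_def by (simp add: abs_mult suminf_mult[OF cf_summable])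
qed (simp_all add: sgn_l1_def dist_l1_def uniformity_l1_def open_l1_def)
end

lemma norm_l1_def': "norm x = (\<Sum>n. \<bar>cf x n\<bar>)" by (simp add: norm_l1_def)

lemma abs_cf_le_norm: "\<bar>cf x n\<bar> \<le> norm x"
  unfolding norm_l1_def' using sum_le_suminf[OF cf_summable, of "{n}"] by simp

lemma sum_abs_cf_le_norm: "(\<Sum>n<N. \<bar>cf x n\<bar>) \<le> norm x"
  unfolding norm_l1_def' using cf_summable by (rule sum_le_suminf) auto

lemma bounded_linear_cf: "bounded_linear (\<lambda>x. cf x n)"
  by (rule bounded_linear_intro[where K=1]) (auto simp: abs_cf_le_norm)

lemma norm_le_l1I:
  assumes "\<And>N. (\<Sum>n<N. \<bar>cf x n\<bar>) \<le> B" shows "norm x \<le> B"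
  unfolding norm_l1_def' using cf_summable assms by (rule suminf_le_const)

instance l1 :: banach
proof
  fix X :: "nat \<Rightarrow> l1" assume "Cauchy X"
  have comp: "Cauchy (\<lambda>m. cf (X m) n)" for n
    using \<open>Cauchy X\<close> unfolding Cauchy_def dist_real_def dist_l1_def
    by (metis abs_cf_le_norm cf_diff le_less_trans)
  define g where "g n = lim (\<lambda>m. cf (X m) n)" for n
  have g: "(\<lambda>m. cf (X m) n) \<longlonglongrightarrow> g n" for n
    using comp[of n] by (simp add: g_def Cauchy_convergent_iff convergent_LIMSEQ_iff)
  have g0: "g 0 = 0" using g[of 0] by (simp add: LIMSEQ_const_iff)
  have key: "\<exists>M. \<forall>m\<ge>M. \<forall>N. (\<Sum>n<N. \<bar>cf (X m) n - g n\<bar>) \<le> e" if "e > 0" for e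
  proof -
    obtain M where M: "\<forall>m\<ge>M. \<forall>p\<ge>M. dist (X m) (X p) < e"
      using \<open>Cauchy X\<close> \<open>e > 0\<close> unfolding Cauchy_def by blast
    have "(\<Sum>n<N. \<bar>cf (X m) n - g n\<bar>) \<le> e" if "m \<ge> M" for m N
    proof -
      have lim: "(\<lambda>p. \<Sum>n<N. \<bar>cf (X m) n - cf (X p) n\<bar>) \<longlonglongrightarrow> (\<Sum>n<N. \<bar>cf (X m) n - g n\<bar>)"
        by (intro tendsto_intros g)
      have "eventually (\<lambda>p. (\<Sum>n<N. \<bar>cf (X m) n - cf (X p) n\<bar>) \<le> e) sequentially"
      proof (rule eventually_sequentiallyI[of M])
        fix p assume "p \<ge> M"
        have "(\<Sum>n<N. \<bar>cf (X m) n - cf (X p) n\<bar>) = (\<Sum>n<N. \<bar>cf (X m - X p) n\<bar>)" by simp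
        also have "\<dots> \<le> norm (X m - X p)" by (rule sum_abs_cf_le_norm)
        also have "\<dots> < e" using M \<open>p \<ge> M\<close> \<open>m \<ge> M\<close> by (simp add: dist_l1_def)
        finally show "(\<Sum>n<N. \<bar>cf (X m) n - cf (X p) n\<bar>) \<le> e" by simp
      qed
      then show ?thesis using lim by (metis (mono_tags, lifting) LIMSEQ_le_const2 eventually_sequentially)
    qed
    then show ?thesis by blast
  qed
  obtain M1 where M1: "\<forall>m\<ge>M1. \<forall>N. (\<Sum>n<N. \<bar>cf (X m) n - g n\<bar>) \<le> 1"
    using key[of 1] by auto
  have gs: "summable (\<lambda>n. \<bar>g n\<bar>)"
  proof -
    have "summable (\<lambda>n. \<bar>cf (X M1) n - g n\<bar>)"
      by (rule summableI_nonneg_bounded[where x=1]) (use M1 in auto)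
    then have "summable (\<lambda>n. \<bar>cf (X M1) n\<bar> + \<bar>cf (X M1) n - g n\<bar>)"
      using cf_summable summable_add by blast
    then show ?thesis by (rule summable_comparison_test[rotated]) auto
  qed
  define x where "x = Abs_l1 g"
  have cfx: "cf x = g" unfolding x_def using g0 gs by (simp add: Abs_l1_inverse)
  have "X \<longlonglongrightarrow> x"
  proof (rule metric_LIMSEQ_I)
    fix r :: real assume "r > 0"
    obtain M where M: "\<forall>m\<ge>M. \<forall>N. (\<Sum>n<N. \<bar>cf (X m) n - g n\<bar>) \<le> r/2"
      using key[of "r/2"] \<open>r > 0\<close> by auto
    show "\<exists>no. \<forall>m\<ge>no. dist (X m) x < r"
    proof (intro exI allI impI)
      fix m assume "m \<ge> M"
      have "norm (X m - x) \<le> r/2"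
        by (rule norm_le_l1I) (use M \<open>m \<ge> M\<close> in \<open>simp add: cfx\<close>)
      then show "dist (X m) x < r" using \<open>r > 0\<close> by (simp add: dist_l1_def)
    qed
  qed
  then show "convergent X" by (rule convergentI)
qed


locale wgt =
  fixes w :: "nat \<Rightarrow> real"
  assumes w_ge1: "\<And>n. n \<ge> 1 \<Longrightarrow> w n \<ge> 1"
begin

definition tol1 :: "(nat \<Rightarrow> real) \<Rightarrow> l1" where
  "tol1 f = Abs_l1 (\<lambda>n. if n = 0 then 0 else w n * f n)"
definition ofl1 :: "l1 \<Rightarrow> nat \<Rightarrow> real" where
  "ofl1 x = (\<lambda>n. if n = 0 then 0 else cf x n / w n)"

lemma w_pos: "n \<ge> 1 \<Longrightarrow> w n > 0" using w_ge1[of n] by simp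
lemma w_pos'[simp]: "n \<noteq> 0 \<Longrightarrow> w n > 0" by (rule w_pos) (simp add: Suc_le_eq)
lemma w_abs[simp]: "n \<noteq> 0 \<Longrightarrow> \<bar>w n\<bar> = w n" by (simp add: less_imp_le)
lemma w_nz[simp]: "n \<noteq> 0 \<Longrightarrow> w n \<noteq> 0" by (simp add: less_imp_neq[symmetric] del: w_pos' w_abs) (metis w_pos' less_irrefl)

lemma lw_summable: "f \<in> lw w \<Longrightarrow> summable (\<lambda>n. \<bar>if n = 0 then 0 else w n * f n\<bar>)"
  unfolding lw_def
  apply (erule CollectE, erule conjE)
  apply (erule summable_comparison_test[rotated])
  by (auto simp: abs_mult)

lemma cf_tol1: "f \<in> lw w \<Longrightarrow> cf (tol1 f) n = (if n = 0 then 0 else w n * f n)"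
  unfolding tol1_def using lw_summable by (subst Abs_l1_inverse) auto

lemma lw_zero: "f \<in> lw w \<Longrightarrow> f 0 = 0" by (simp add: lw_def)

lemma norm_tol1: "f \<in> lw w \<Longrightarrow> norm (tol1 f) = wnorm w f"
  unfolding norm_l1_def' wnorm_def
  by (rule suminf_cong) (auto simp: cf_tol1 lw_zero abs_mult)

lemma ofl1_lw[simp]: "ofl1 x \<in> lw w"
  unfolding lw_def ofl1_def
proof safe
  show "summable (\<lambda>n. w n * \<bar>if n = 0 then 0 else cf x n / w n\<bar>)"
    by (rule summable_cong[THEN iffD1, OF _ cf_summable[of x]])
       (auto simp: abs_div intro!: eventuallyI)
qed simp

lemma tol1_ofl1[simp]: "tol1 (ofl1 x) = x"
proof (rule cf_eqI)
  fix n show "cf (tol1 (ofl1 x)) n = cf x n"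
    using cf_tol1[OF ofl1_lw, of x n] by (cases "n = 0") (simp_all add: ofl1_def)
qed

lemma ofl1_tol1[simp]: "f \<in> lw w \<Longrightarrow> ofl1 (tol1 f) = f"
  by (rule ext) (use w_pos in \<open>auto simp: cf_tol1 ofl1_def lw_zero\<close>)

lemma ofl1_cf: "n \<ge> 1 \<Longrightarrow> ofl1 x n = cf x n / w n" by (simp add: ofl1_def)

lemma lw_lin: "f \<in> lw w \<Longrightarrow> g \<in> lw w \<Longrightarrow> (\<lambda>n. c * f n + d * g n) \<in> lw w"
proof -
  assume f: "f \<in> lw w" and g: "g \<in> lw w"
  have "(\<lambda>n. c * f n + d * g n) = ofl1 (c *\<^sub>R tol1 f + d *\<^sub>R tol1 g)"
    by (rule ext) (use f g in \<open>auto simp: ofl1_def cf_tol1 lw_zero cf_tol1[OF f] cf_tol1[OF g] field_simps\<close>)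
  then show ?thesis by simp
qed

lemma tol1_lin: "f \<in> lw w \<Longrightarrow> g \<in> lw w \<Longrightarrow> tol1 (\<lambda>n. c * f n + d * g n) = c *\<^sub>R tol1 f + d *\<^sub>R tol1 g"
  by (rule cf_eqI) (auto simp: cf_tol1 lw_lin algebra_simps)

lemma lw_diff: "f \<in> lw w \<Longrightarrow> g \<in> lw w \<Longrightarrow> (\<lambda>n. f n - g n) \<in> lw w"
  using lw_lin[of f g 1 "-1"] by simp
lemma tol1_diff: "f \<in> lw w \<Longrightarrow> g \<in> lw w \<Longrightarrow> tol1 (\<lambda>n. f n - g n) = tol1 f - tol1 g"
  using tol1_lin[of f g 1 "-1"] by simp
lemma lw_scale: "f \<in> lw w \<Longrightarrow> (\<lambda>n. f n / c) \<in> lw w"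
  using lw_lin[of f f "1/c" 0] by simp
lemma tol1_scale: "f \<in> lw w \<Longrightarrow> tol1 (\<lambda>n. f n / c) = (1/c) *\<^sub>R tol1 f"
  using tol1_lin[of f f "1/c" 0] by simp
lemma lw_diffq: "f \<in> lw w \<Longrightarrow> g \<in> lw w \<Longrightarrow> (\<lambda>n. (f n - g n) / c) \<in> lw w"
  using lw_lin[of f g "1/c" "-1/c"] by (simp add: diff_divide_distrib)
lemma tol1_diffq: "f \<in> lw w \<Longrightarrow> g \<in> lw w \<Longrightarrow> tol1 (\<lambda>n. (f n - g n) / c) = (1/c) *\<^sub>R (tol1 f - tol1 g)"
  using tol1_lin[of f g "1/c" "-1/c"] by (simp add: diff_divide_distrib algebra_simps)

lemma wnorm_diff: "f \<in> lw w \<Longrightarrow> g \<in> lw w \<Longrightarrow> wnorm w (\<lambda>n. f n - g n) = norm (tol1 f - tol1 g)"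
  using norm_tol1[OF lw_diff] tol1_diff by simp

lemma lw_tendsto_iff:
  assumes ev: "eventually (\<lambda>x. F x \<in> lw w) L" and g: "g \<in> lw w"
  shows "lw_tendsto w F g L \<longleftrightarrow> ((\<lambda>x. tol1 (F x)) \<longlongrightarrow> tol1 g) L"
proof -
  have "lw_tendsto w F g L \<longleftrightarrow> ((\<lambda>x. norm (tol1 (F x) - tol1 g)) \<longlongrightarrow> 0) L"
    unfolding lw_tendsto_def
    by (rule tendsto_cong) (use ev in \<open>eventually_elim, use g wnorm_diff in auto\<close>)
  also have "\<dots> \<longleftrightarrow> ((\<lambda>x. tol1 (F x)) \<longlongrightarrow> tol1 g) L"
    by (simp add: tendsto_norm_zero_iff LIM_zero_iff)
  finally show ?thesis .
qed

lemma tol1_eqI: "f \<in> lw w \<Longrightarrow> g \<in> lw w \<Longrightarrow> tol1 f = tol1 g \<Longrightarrow> f = g"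
  by (metis ofl1_tol1)

end

locale sgrp = wgt +
  fixes S :: "real \<Rightarrow> (nat \<Rightarrow> real) \<Rightarrow> nat \<Rightarrow> real" and P
  assumes gen: "C0_semigroup_gen w S P"
begin

definition T :: "real \<Rightarrow> l1 \<Rightarrow> l1" where "T t x = tol1 (S t (ofl1 x))"

lemma S_lw: "t \<ge> 0 \<Longrightarrow> f \<in> lw w \<Longrightarrow> S t f \<in> lw w"
  using gen unfolding C0_semigroup_gen_def by blast

lemma T_S: "t \<ge> 0 \<Longrightarrow> f \<in> lw w \<Longrightarrow> T t (tol1 f) = tol1 (S t f)"
  by (simp add: T_def)

lemma S_T: "t \<ge> 0 \<Longrightarrow> f \<in> lw w \<Longrightarrow> S t f = ofl1 (T t (tol1 f))"
  by (simp add: T_def S_lw)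

lemma T_linear: assumes "t \<ge> 0" shows "bounded_linear (T t)"
proof -
  have lin: "S t (\<lambda>n. c * f n + d * g n) = (\<lambda>n. c * S t f n + d * S t g n)"
    if "f \<in> lw w" "g \<in> lw w" for f g c d
    using gen assms that unfolding C0_semigroup_gen_def by blast
  obtain M where M: "\<forall>f\<in>lw w. wnorm w (S t f) \<le> M * wnorm w f"
    using gen assms unfolding C0_semigroup_gen_def by blast
  have add: "T t (c *\<^sub>R x + d *\<^sub>R y) = c *\<^sub>R T t x + d *\<^sub>R T t y" for c d x y
  proof -
    have e: "ofl1 (c *\<^sub>R x + d *\<^sub>R y) = (\<lambda>n. c * ofl1 x n + d * ofl1 y n)"
      by (rule tol1_eqI) (simp_all add: tol1_lin lw_lin)
    show ?thesis
      unfolding T_def e by (simp add: lin lw_lin tol1_lin S_lw assms)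
  qed
  show ?thesis
  proof (rule bounded_linear_intro[where K=M])
    show "T t (x + y) = T t x + T t y" for x y using add[of 1 x 1 y] by simp
    show "T t (r *\<^sub>R x) = r *\<^sub>R T t x" for r x using add[of r x 0 x] by simp
    show "norm (T t x) \<le> norm x * M" for x
      using M[rule_format, of "ofl1 x"] norm_tol1[OF ofl1_lw, of x]
      by (simp add: T_def norm_tol1 S_lw assms mult.commute)
  qed
qed

lemma T_0: "T 0 x = x"
  using gen unfolding C0_semigroup_gen_def T_def by simp

lemma T_add: "t \<ge> 0 \<Longrightarrow> s \<ge> 0 \<Longrightarrow> T (t + s) x = T t (T s x)"
  using gen S_lw unfolding C0_semigroup_gen_def T_def by simp

lemma T_cont: "t \<ge> 0 \<Longrightarrow> ((\<lambda>s. T s x) \<longlongrightarrow> T t x) (at t within {0..})"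
proof -
  assume t: "t \<ge> 0"
  have "lw_tendsto w (\<lambda>s. S s (ofl1 x)) (S t (ofl1 x)) (at t within {0..})"
    using gen t unfolding C0_semigroup_gen_def by simp
  moreover have "eventually (\<lambda>s. S s (ofl1 x) \<in> lw w) (at t within {0..})"
    by (auto simp: eventually_at_filter S_lw)
  ultimately show ?thesis
    using lw_tendsto_iff[of "\<lambda>s. S s (ofl1 x)" "at t within {0..}" "S t (ofl1 x)"] S_lw[OF t] by (simp add: T_def)
qed

lemma T_contin: "continuous_on {0..} (\<lambda>s. T s x)"
  using T_cont by (simp add: continuous_on_def)

lemma generator:
  assumes f: "f \<in> lw w" and g: "g \<in> lw w"
  shows "(f, g) \<in> P \<longleftrightarrow> ((\<lambda>h. (1/h) *\<^sub>R (T h (tol1 f) - tol1 f)) \<longlongrightarrow> tol1 g) (at_right 0)"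
proof -
  have "(f, g) \<in> P \<longleftrightarrow> lw_tendsto w (\<lambda>h n. (S h f n - f n) / h) g (at_right 0)"
    using gen f g unfolding C0_semigroup_gen_def by blast
  also have "\<dots> \<longleftrightarrow> ((\<lambda>h. tol1 (\<lambda>n. (S h f n - f n) / h)) \<longlongrightarrow> tol1 g) (at_right 0)"
    by (rule lw_tendsto_iff[OF _ g])
       (auto simp: eventually_at_right_less intro!: eventually_at_rightI[of 0 1] lw_diffq S_lw f)
  also have "\<dots> \<longleftrightarrow> ((\<lambda>h. (1/h) *\<^sub>R (T h (tol1 f) - tol1 f)) \<longlongrightarrow> tol1 g) (at_right 0)"
    by (rule tendsto_cong)
       (auto intro!: eventually_at_rightI[of 0 1] simp: tol1_diffq S_lw f T_S)
  finally show ?thesis .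
qed

end


context sgrp
begin

lemma T_orbit_bounded:
  assumes "t1 \<ge> 0" shows "\<exists>B. \<forall>t\<in>{0..t1}. norm (T t x) \<le> B"
proof -
  have "continuous_on {0..t1} (\<lambda>t. T t x)"
    by (rule continuous_on_subset[OF T_contin]) auto
  then have "compact ((\<lambda>t. T t x) ` {0..t1})"
    by (rule compact_continuous_image) simp
  then obtain B where "\<forall>y\<in>(\<lambda>t. T t x) ` {0..t1}. norm y \<le> B"
    using compact_imp_bounded bounded_iff by metis
  then show ?thesis by auto
qed

lemma T_bound:
  assumes t1: "t1 \<ge> 0"
  shows "\<exists>M>0. \<forall>t\<in>{0..t1}. \<forall>x. norm (T t x) \<le> M * norm x"
proof -
  define F where "F m = {x. \<forall>t\<in>{0..t1}. norm (T t x) \<le> real m}" for m :: nat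
  have closedF: "closed (F m)" for m
  proof -
    have "F m = (\<Inter>t\<in>{0..t1}. {x. norm (T t x) \<le> real m})"
      by (auto simp: F_def)
    moreover have "closed {x. norm (T t x) \<le> real m}" if "t \<in> {0..t1}" for t
    proof -
      have "continuous_on UNIV (\<lambda>x. norm (T t x))"
        using T_linear[of t] that
        by (intro continuous_on_norm linear_continuous_on) auto
      moreover have "continuous_on UNIV (\<lambda>x::l1. real m)" by (rule continuous_on_const)
      ultimately show ?thesis
        using closed_Collect_le[of "\<lambda>x. norm (T t x)" "\<lambda>_. real m"] by simp
    qed
    ultimately show ?thesis by auto
  qed
  have unionF: "UNIV \<subseteq> \<Union>(range F)"
  proof (rule subsetI)
    fix x assume "x \<in> (UNIV::l1 set)"
    obtain B where "\<forall>t\<in>{0..t1}. norm (T t x) \<le> B" using T_orbit_bounded[OF t1] by blast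
    moreover obtain m :: nat where "B \<le> real m" using real_arch_simple by blast
    ultimately have "x \<in> F m" unfolding F_def by force
    then show "x \<in> \<Union>(range F)" by blast
  qed
  have "\<exists>m. interior (F m) \<noteq> {}"
  proof (rule ccontr)
    assume "\<not> ?thesis"
    then have "euclidean interior_of \<Union>(range F) = {}"
      by (intro Baire_category_alt)
         (auto simp: completely_metrizable_space_euclidean closed_closedin[symmetric] closedF)
    moreover have "\<Union>(range F) = UNIV" using unionF by blast
    ultimately show False by simp
  qed
  then obtain m x0 where "x0 \<in> interior (F m)" by blast
  then obtain r where r: "r > 0" "ball x0 r \<subseteq> F m"
    by (meson mem_interior)
  have bnd: "norm (T t x) \<le> (4 * real m / r) * norm x" if t: "t \<in> {0..t1}" for t x
  proof (cases "x = 0")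
    case True
    then show ?thesis using T_linear[of t] t by (simp add: linear_simps)
  next
    case False
    define c where "c = r / (2 * norm x)"
    have c: "c > 0" using r False by (simp add: c_def)
    have "x0 + c *\<^sub>R x \<in> ball x0 r"
      using r False by (simp add: c_def dist_norm)
    then have y: "norm (T t (x0 + c *\<^sub>R x)) \<le> real m" using r t by (auto simp: F_def)
    have "x0 \<in> ball x0 r" using r by simp
    then have x0: "norm (T t x0) \<le> real m" using r(2) t unfolding F_def by blast
    have lin: "T t (x0 + c *\<^sub>R x) = T t x0 + c *\<^sub>R T t x"
      using T_linear[of t] t by (simp add: linear_simps)
    have "c * norm (T t x) = norm (T t (x0 + c *\<^sub>R x) - T t x0)"
      using c by (simp add: lin)
    also have "\<dots> \<le> 2 * real m" using y x0 norm_triangle_ineq4[of "T t (x0 + c *\<^sub>R x)" "T t x0"] by linarith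
    finally have "norm (T t x) \<le> 2 * real m / c" using c by (simp add: field_simps)
    also have "\<dots> = (4 * real m / r) * norm x" using r False by (simp add: c_def field_simps)
    finally show ?thesis .
  qed
  have pos: "0 < 4 * real m / r + 1" using r by (simp add: add_nonneg_pos)
  have "norm (T t x) \<le> (4 * real m / r + 1) * norm x" if "t \<in> {0..t1}" for t x
  proof -
    have "norm (T t x) \<le> (4 * real m / r) * norm x + norm x"
      using bnd[OF that, of x] norm_ge_zero[of x] by linarith
    then show ?thesis by (simp add: distrib_right)
  qed
  then show ?thesis using pos by blast
qed

end


definition Qs :: "(nat \<Rightarrow> nat \<Rightarrow> real) \<Rightarrow> (nat \<Rightarrow> real) \<Rightarrow> (nat \<Rightarrow> real) \<Rightarrow> nat \<Rightarrow> real" where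
  "Qs c f g n = (if n = 0 then 0 else
      (1/2) * (\<Sum>j\<in>{1..<n}. c (n - j) j * f (n - j) * g j)
      - (\<Sum>j. c n (Suc j) * f n * g (Suc j)))"

lemma opK_Qs: "opK k t f = Qs (\<lambda>n j. k n j t) f f"
  by (simp add: opK_def Qs_def fun_eq_iff)

locale wgtm = wgt +
  assumes w_mono: "\<And>n m. 1 \<le> n \<Longrightarrow> n \<le> m \<Longrightarrow> w n \<le> w m"
begin

definition cbound :: "real \<Rightarrow> (nat \<Rightarrow> nat \<Rightarrow> real) \<Rightarrow> bool" where
  "cbound C c \<longleftrightarrow> (\<forall>n\<ge>1. \<forall>j\<ge>1. \<bar>c n j\<bar> \<le> C * w n * w j / w (n + j))"

lemma cboundD: "cbound C c \<Longrightarrow> n \<noteq> 0 \<Longrightarrow> j \<noteq> 0 \<Longrightarrow> \<bar>c n j\<bar> \<le> C * w n * w j / w (n + j)"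
  unfolding cbound_def by (simp add: Suc_le_eq)

lemma cbound_nonneg: "cbound C c \<Longrightarrow> C \<ge> 0"
proof -
  assume "cbound C c"
  from cboundD[OF this, of 1 1] have h: "0 \<le> C * w 1 * w 1 / w 2" by (simp add: numeral_2_eq_2)
  have p: "w 1 > 0" "w 2 > 0" by simp_all
  show "C \<ge> 0"
  proof (rule ccontr)
    assume "\<not> C \<ge> 0"
    then have "C * w 1 * w 1 < 0" using p by (simp add: mult_neg_pos)
    then have "C * w 1 * w 1 / w 2 < 0" using p by (simp add: divide_neg_pos)
    then show False using h by simp
  qed
qed

lemma w_ge0[simp]: "n \<noteq> 0 \<Longrightarrow> 0 \<le> w n" using w_pos'[of n] by linarith

lemma cbound_mono: "cbound C c \<Longrightarrow> C \<le> D \<Longrightarrow> cbound D c"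
  unfolding cbound_def
proof (intro allI impI)
  fix n j :: nat assume c: "\<forall>n\<ge>1. \<forall>j\<ge>1. \<bar>c n j\<bar> \<le> C * w n * w j / w (n + j)" and CD: "C \<le> D"
    and nj: "1 \<le> n" "1 \<le> j"
  from c nj have a: "\<bar>c n j\<bar> \<le> C * w n * w j / w (n + j)" by blast
  have b: "C * w n * w j / w (n + j) \<le> D * w n * w j / w (n + j)"
    using nj CD by (intro divide_right_mono mult_right_mono) auto
  show "\<bar>c n j\<bar> \<le> D * w n * w j / w (n + j)" using a b by linarith
qed

lemma cbound_lin: "cbound C c \<Longrightarrow> cbound D d \<Longrightarrow> cbound (\<bar>\<alpha>\<bar> * C + \<bar>\<beta>\<bar> * D) (\<lambda>n j. \<alpha> * c n j + \<beta> * d n j)"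
proof -
  assume c: "cbound C c" and d: "cbound D d"
  show ?thesis unfolding cbound_def
  proof (intro allI impI)
    fix n j :: nat assume "n \<ge> 1" "j \<ge> 1"
    then have nj: "n \<noteq> 0" "j \<noteq> 0" by auto
    have "\<bar>\<alpha> * c n j + \<beta> * d n j\<bar> \<le> \<bar>\<alpha>\<bar> * \<bar>c n j\<bar> + \<bar>\<beta>\<bar> * \<bar>d n j\<bar>"
      by (metis abs_mult abs_triangle_ineq)
    also have "\<dots> \<le> \<bar>\<alpha>\<bar> * (C * w n * w j / w (n + j)) + \<bar>\<beta>\<bar> * (D * w n * w j / w (n + j))"
      by (intro add_mono mult_left_mono cboundD[OF c nj] cboundD[OF d nj]) auto
    also have "\<dots> = (\<bar>\<alpha>\<bar> * C + \<bar>\<beta>\<bar> * D) * w n * w j / w (n + j)"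
      by (simp add: add_divide_distrib ring_distribs mult.assoc)
    finally show "\<bar>\<alpha> * c n j + \<beta> * d n j\<bar> \<le> (\<bar>\<alpha>\<bar> * C + \<bar>\<beta>\<bar> * D) * w n * w j / w (n + j)" .
  qed
qed

lemma w_le_add1: "n \<noteq> 0 \<Longrightarrow> w n \<le> w (n + j)" by (rule w_mono) auto
lemma w_le_add2: "j \<noteq> 0 \<Longrightarrow> w j \<le> w (n + j)" by (rule w_mono) auto

lemma loss_term_bound:
  assumes c: "cbound C c" and nj: "n \<noteq> 0" "j \<noteq> 0"
  shows "w n * \<bar>c n j * x * y\<bar> \<le> C * (w n * \<bar>x\<bar>) * (w j * \<bar>y\<bar>)"
proof -
  have C: "C \<ge> 0" using cbound_nonneg[OF c] .
  have "\<bar>c n j\<bar> \<le> C * w n * w j / w (n + j)" using cboundD[OF c nj] .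
  also have "\<dots> \<le> C * w j"
  proof -
    have "w n \<le> w (n + j)" using w_le_add1[OF nj(1)] .
    then have "w n / w (n + j) \<le> 1" using w_pos'[of "n+j"] nj by simp
    then have "C * w j * (w n / w (n + j)) \<le> C * w j * 1"
      using C w_pos'[OF nj(2)] by (intro mult_left_mono) auto
    then show ?thesis by (simp add: field_simps)
  qed
  finally have "\<bar>c n j\<bar> \<le> C * w j" .
  then have "w n * \<bar>c n j\<bar> * (\<bar>x\<bar> * \<bar>y\<bar>) \<le> w n * (C * w j) * (\<bar>x\<bar> * \<bar>y\<bar>)"
    using w_pos'[OF nj(1)] by (intro mult_right_mono mult_left_mono) auto
  then show ?thesis by (simp add: abs_mult algebra_simps)
qed

lemma loss_term_bound':
  assumes c: "cbound C c" and nj: "n \<noteq> 0" "j \<noteq> 0"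
  shows "\<bar>c n j * x * y\<bar> \<le> C * \<bar>x\<bar> * (w j * \<bar>y\<bar>)"
proof -
  have "w n * \<bar>c n j * x * y\<bar> \<le> w n * (C * \<bar>x\<bar> * (w j * \<bar>y\<bar>))"
    using loss_term_bound[OF assms, of x y] by (simp add: algebra_simps)
  then show ?thesis using w_pos'[OF nj(1)] by simp
qed

lemma gain_term_bound:
  assumes c: "cbound C c" and j: "j \<in> {1..<n}"
  shows "w n * \<bar>c (n - j) j * x * y\<bar> \<le> C * (w (n - j) * \<bar>x\<bar>) * (w j * \<bar>y\<bar>)"
proof -
  have nj: "n - j \<noteq> 0" "j \<noteq> 0" and e: "n - j + j = n" using j by auto
  have "\<bar>c (n - j) j\<bar> \<le> C * w (n - j) * w j / w n" using cboundD[OF c nj] e by simp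
  then have "w n * \<bar>c (n - j) j\<bar> \<le> C * w (n - j) * w j"
    using w_pos'[of n] j by (simp add: field_simps)
  then have "w n * \<bar>c (n - j) j\<bar> * (\<bar>x\<bar> * \<bar>y\<bar>) \<le> C * w (n - j) * w j * (\<bar>x\<bar> * \<bar>y\<bar>)"
    by (intro mult_right_mono) auto
  then show ?thesis by (simp add: abs_mult algebra_simps)
qed

definition av :: "(nat \<Rightarrow> real) \<Rightarrow> nat \<Rightarrow> real" where "av f i = w i * \<bar>f i\<bar>"

lemma av_nonneg: "f \<in> lw w \<Longrightarrow> av f i \<ge> 0"
  by (cases "i = 0") (auto simp: av_def lw_zero intro!: mult_nonneg_nonneg)

lemma av_summable: "f \<in> lw w \<Longrightarrow> summable (av f)"
  by (simp add: av_def[abs_def] lw_def)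

lemma av_sum: "f \<in> lw w \<Longrightarrow> suminf (av f) = wnorm w f"
  by (simp add: av_def[abs_def] wnorm_def)

lemma av_0: "f \<in> lw w \<Longrightarrow> av f 0 = 0" by (simp add: av_def lw_zero)

lemma loss_summable:
  assumes c: "cbound C c" and g: "g \<in> lw w" and n: "n \<noteq> 0"
  shows "summable (\<lambda>j. \<bar>c n (Suc j) * x * g (Suc j)\<bar>)"
proof -
  have "summable (\<lambda>j. C * \<bar>x\<bar> * av g (Suc j))"
    using av_summable[OF g] by (intro summable_mult) (simp add: summable_Suc_iff)
  then show ?thesis
    by (rule summable_comparison_test[rotated])
       (auto simp: av_def intro!: exI[of _ 0] loss_term_bound'[OF c n])
qed

lemma loss_sum_bound:
  assumes c: "cbound C c" and g: "g \<in> lw w" and n: "n \<noteq> 0"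
  shows "w n * \<bar>\<Sum>j. c n (Suc j) * f n * g (Suc j)\<bar> \<le> C * av f n * wnorm w g"
proof -
  have s: "summable (\<lambda>j. \<bar>c n (Suc j) * f n * g (Suc j)\<bar>)" by (rule loss_summable[OF c g n])
  have s2: "summable (\<lambda>j. C * av f n * av g (Suc j))"
    using av_summable[OF g] by (intro summable_mult) (simp add: summable_Suc_iff)
  have "\<bar>\<Sum>j. c n (Suc j) * f n * g (Suc j)\<bar> \<le> (\<Sum>j. \<bar>c n (Suc j) * f n * g (Suc j)\<bar>)"
    by (rule summable_rabs[OF s])
  then have "w n * \<bar>\<Sum>j. c n (Suc j) * f n * g (Suc j)\<bar> \<le> w n * (\<Sum>j. \<bar>c n (Suc j) * f n * g (Suc j)\<bar>)"
    using w_pos'[OF n] by (intro mult_left_mono) auto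
  also have "\<dots> = (\<Sum>j. w n * \<bar>c n (Suc j) * f n * g (Suc j)\<bar>)"
    by (rule suminf_mult[OF s, symmetric])
  also have "\<dots> \<le> (\<Sum>j. C * av f n * av g (Suc j))"
    by (rule suminf_le[OF _ summable_mult[OF s] s2])
       (use loss_term_bound[OF c n] in \<open>simp add: av_def\<close>)
  also have "\<dots> = C * av f n * (\<Sum>j. av g (Suc j))"
    by (rule suminf_mult) (use av_summable[OF g] in \<open>simp add: summable_Suc_iff\<close>)
  also have "(\<Sum>j. av g (Suc j)) = wnorm w g"
    using suminf_split_head[OF av_summable[OF g]] av_0[OF g] av_sum[OF g] by simp
  finally show ?thesis .
qed

lemma gain_sum_bound:
  assumes c: "cbound C c" and f: "f \<in> lw w" and g: "g \<in> lw w"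
  shows "w n * \<bar>\<Sum>j\<in>{1..<n}. c (n - j) j * f (n - j) * g j\<bar> \<le> C * (\<Sum>i\<le>n. av g i * av f (n - i))"
proof -
  have C: "C \<ge> 0" using cbound_nonneg[OF c] .
  have "w n * \<bar>\<Sum>j\<in>{1..<n}. c (n - j) j * f (n - j) * g j\<bar> \<le> w n * (\<Sum>j\<in>{1..<n}. \<bar>c (n - j) j * f (n - j) * g j\<bar>)"
    by (cases "n = 0") (auto intro!: mult_left_mono sum_abs)
  also have "\<dots> = (\<Sum>j\<in>{1..<n}. w n * \<bar>c (n - j) j * f (n - j) * g j\<bar>)"
    by (simp add: sum_distrib_left)
  also have "\<dots> \<le> (\<Sum>j\<in>{1..<n}. C * (av f (n - j) * av g j))"
    by (rule sum_mono) (use gain_term_bound[OF c] in \<open>simp add: av_def mult.assoc\<close>)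
  also have "\<dots> = C * (\<Sum>j\<in>{1..<n}. av f (n - j) * av g j)"
    by (simp add: sum_distrib_left)
  also have "(\<Sum>j\<in>{1..<n}. av f (n - j) * av g j) \<le> (\<Sum>i\<le>n. av g i * av f (n - i))"
    by (subst mult.commute, rule sum_mono2) (auto intro!: mult_nonneg_nonneg av_nonneg f g)
  finally show ?thesis using C by (simp add: mult_left_mono)
qed

lemma Qs_bound_term:
  assumes c: "cbound C c" and f: "f \<in> lw w" and g: "g \<in> lw w"
  shows "w n * \<bar>Qs c f g n\<bar> \<le> C/2 * (\<Sum>i\<le>n. av g i * av f (n - i)) + C * av f n * wnorm w g"
proof (cases "n = 0")
  case True then show ?thesis
    using cbound_nonneg[OF c] av_nonneg[OF f] av_nonneg[OF g] wnorm_def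
    by (simp add: av_0[OF f] av_0[OF g] Qs_def)
next
  case False
  let ?G = "\<Sum>j\<in>{1..<n}. c (n - j) j * f (n - j) * g j"
  let ?L = "\<Sum>j. c n (Suc j) * f n * g (Suc j)"
  have "w n * \<bar>Qs c f g n\<bar> = w n * \<bar>(1/2) * ?G - ?L\<bar>" using False by (simp add: Qs_def)
  also have "\<dots> \<le> (1/2) * (w n * \<bar>?G\<bar>) + w n * \<bar>?L\<bar>"
  proof -
    have "\<bar>(1/2) * ?G - ?L\<bar> \<le> (1/2) * \<bar>?G\<bar> + \<bar>?L\<bar>" by (simp add: abs_mult abs_triangle_ineq4)
    then have "w n * \<bar>(1/2) * ?G - ?L\<bar> \<le> w n * ((1/2) * \<bar>?G\<bar> + \<bar>?L\<bar>)"
      using False by (intro mult_left_mono) auto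
    then show ?thesis by (simp add: algebra_simps)
  qed
  also have "\<dots> \<le> (1/2) * (C * (\<Sum>i\<le>n. av g i * av f (n - i))) + C * av f n * wnorm w g"
    by (intro add_mono mult_left_mono gain_sum_bound[OF c f g] loss_sum_bound[OF c g False]) auto
  finally show ?thesis by simp
qed

lemma Qs_lw_bound:
  assumes c: "cbound C c" and f: "f \<in> lw w" and g: "g \<in> lw w"
  shows "Qs c f g \<in> lw w" "wnorm w (Qs c f g) \<le> 3/2 * C * wnorm w f * wnorm w g"
proof -
  have sa: "summable (\<lambda>k. norm (av g k))" "summable (\<lambda>k. norm (av f k))"
    using av_summable[OF f] av_summable[OF g] av_nonneg[OF f] av_nonneg[OF g] by simp_all
  have cp: "summable (\<lambda>k. \<Sum>i\<le>k. av g i * av f (k - i))"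
    using summable_Cauchy_product[OF sa] .
  have cpv: "(\<Sum>k. \<Sum>i\<le>k. av g i * av f (k - i)) = wnorm w f * wnorm w g"
    using Cauchy_product[OF sa] av_sum[OF f] av_sum[OF g] by (simp add: mult.commute)
  have sb: "summable (\<lambda>n. C/2 * (\<Sum>i\<le>n. av g i * av f (n - i)) + C * av f n * wnorm w g)"
    by (intro summable_add summable_mult cp summable_mult2 av_summable f)
  have s: "summable (\<lambda>n. w n * \<bar>Qs c f g n\<bar>)"
  proof (rule summable_comparison_test[OF _ sb])
    show "\<exists>N. \<forall>n\<ge>N. norm (w n * \<bar>Qs c f g n\<bar>) \<le> C/2 * (\<Sum>i\<le>n. av g i * av f (n - i)) + C * av f n * wnorm w g"
    proof (intro exI allI impI)
      fix n :: nat
      have "w n * \<bar>Qs c f g n\<bar> \<ge> 0" by (cases "n=0") (simp_all add: Qs_def)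
      then show "norm (w n * \<bar>Qs c f g n\<bar>) \<le> C/2 * (\<Sum>i\<le>n. av g i * av f (n - i)) + C * av f n * wnorm w g"
        using Qs_bound_term[OF c f g, of n] by simp
    qed
  qed
  show "Qs c f g \<in> lw w" using s by (simp add: lw_def Qs_def)
  have "wnorm w (Qs c f g) \<le> (\<Sum>n. C/2 * (\<Sum>i\<le>n. av g i * av f (n - i)) + C * av f n * wnorm w g)"
    unfolding wnorm_def[of w "Qs c f g"] by (rule suminf_le[OF Qs_bound_term[OF c f g] s sb])
  also have "\<dots> = C/2 * (wnorm w f * wnorm w g) + C * wnorm w f * wnorm w g"
  proof -
    have s1: "summable (\<lambda>n. C/2 * (\<Sum>i\<le>n. av g i * av f (n - i)))" by (rule summable_mult[OF cp])
    have s0: "summable (\<lambda>n. C * av f n)" by (rule summable_mult[OF av_summable[OF f]])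
    have s2: "summable (\<lambda>n. C * av f n * wnorm w g)" by (rule summable_mult2[OF s0])
    have e2: "(\<Sum>n. C/2 * (\<Sum>i\<le>n. av g i * av f (n - i))) = C/2 * (wnorm w f * wnorm w g)"
      using suminf_mult[OF cp, of "C/2"] cpv by simp
    have e3: "(\<Sum>n. C * av f n * wnorm w g) = C * wnorm w f * wnorm w g"
      using suminf_mult2[OF s0, of "wnorm w g"] suminf_mult[OF av_summable[OF f], of C] av_sum[OF f] by simp
    show ?thesis using suminf_add[OF s1 s2] e2 e3 by simp
  qed
  also have "\<dots> = 3/2 * C * wnorm w f * wnorm w g" by (simp add: algebra_simps)
  finally show "wnorm w (Qs c f g) \<le> 3/2 * C * wnorm w f * wnorm w g" .
qed

end


context wgtm
begin

definition Ls :: "(nat \<Rightarrow> nat \<Rightarrow> real) \<Rightarrow> (nat \<Rightarrow> real) \<Rightarrow> nat \<Rightarrow> real" where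
  "Ls c g n = (\<Sum>j. c n (Suc j) * g (Suc j))"

lemma Ls_summable:
  assumes c: "cbound C c" and g: "g \<in> lw w" and n: "n \<noteq> 0"
  shows "summable (\<lambda>j. c n (Suc j) * g (Suc j))"
  using summable_rabs_cancel[of "\<lambda>j. c n (Suc j) * g (Suc j)"] loss_summable[OF c g n, of 1] by simp

lemma Qs_alt:
  assumes c: "cbound C c" and g: "g \<in> lw w"
  shows "Qs c f g n = (if n = 0 then 0 else
      (1/2) * (\<Sum>j\<in>{1..<n}. c (n - j) j * f (n - j) * g j) - f n * Ls c g n)"
proof (cases "n = 0")
  case False
  have "(\<Sum>j. c n (Suc j) * f n * g (Suc j)) = (\<Sum>j. f n * (c n (Suc j) * g (Suc j)))"
    by (simp add: algebra_simps)
  also have "\<dots> = f n * Ls c g n"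
    unfolding Ls_def by (rule suminf_mult[OF Ls_summable[OF c g False]])
  finally show ?thesis using False by (simp add: Qs_def)
qed (simp add: Qs_def)

lemma Ls_lin:
  assumes c: "cbound C c" and g: "g \<in> lw w" and g': "g' \<in> lw w" and n: "n \<noteq> 0"
  shows "Ls c (\<lambda>m. \<alpha> * g m + \<beta> * g' m) n = \<alpha> * Ls c g n + \<beta> * Ls c g' n"
proof -
  have "(\<lambda>j. c n (Suc j) * (\<alpha> * g (Suc j) + \<beta> * g' (Suc j))) sums (\<alpha> * Ls c g n + \<beta> * Ls c g' n)"
  proof -
    have "(\<lambda>j. \<alpha> * (c n (Suc j) * g (Suc j)) + \<beta> * (c n (Suc j) * g' (Suc j))) sums (\<alpha> * Ls c g n + \<beta> * Ls c g' n)"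
      unfolding Ls_def
      by (intro sums_add sums_mult summable_sums Ls_summable[OF c g n] Ls_summable[OF c g' n])
    then show ?thesis by (simp add: algebra_simps)
  qed
  then show ?thesis unfolding Ls_def[of c "\<lambda>m. \<alpha> * g m + \<beta> * g' m"] by (rule sums_unique[symmetric])
qed

lemma Ls_lin_coef:
  assumes c: "cbound C c" and d: "cbound D d" and g: "g \<in> lw w" and n: "n \<noteq> 0"
  shows "Ls (\<lambda>a b. \<alpha> * c a b + \<beta> * d a b) g n = \<alpha> * Ls c g n + \<beta> * Ls d g n"
proof -
  have "(\<lambda>j. \<alpha> * (c n (Suc j) * g (Suc j)) + \<beta> * (d n (Suc j) * g (Suc j))) sums (\<alpha> * Ls c g n + \<beta> * Ls d g n)"
    unfolding Ls_def
    by (intro sums_add sums_mult summable_sums Ls_summable[OF c g n] Ls_summable[OF d g n])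
  then have "(\<lambda>j. (\<alpha> * c n (Suc j) + \<beta> * d n (Suc j)) * g (Suc j)) sums (\<alpha> * Ls c g n + \<beta> * Ls d g n)"
    by (simp add: algebra_simps)
  then show ?thesis unfolding Ls_def[of "\<lambda>a b. \<alpha> * c a b + \<beta> * d a b"] by (rule sums_unique[symmetric])
qed

lemma Qs_lin_left:
  assumes c: "cbound C c" and f: "f \<in> lw w" and f': "f' \<in> lw w" and g: "g \<in> lw w"
  shows "Qs c (\<lambda>m. \<alpha> * f m + \<beta> * f' m) g = (\<lambda>n. \<alpha> * Qs c f g n + \<beta> * Qs c f' g n)"
proof
  fix n
  show "Qs c (\<lambda>m. \<alpha> * f m + \<beta> * f' m) g n = \<alpha> * Qs c f g n + \<beta> * Qs c f' g n"
    unfolding Qs_alt[OF c g]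
    by (simp add: algebra_simps sum.distrib sum_distrib_left)
qed

lemma Qs_lin_right:
  assumes c: "cbound C c" and f: "f \<in> lw w" and g: "g \<in> lw w" and g': "g' \<in> lw w"
  shows "Qs c f (\<lambda>m. \<alpha> * g m + \<beta> * g' m) = (\<lambda>n. \<alpha> * Qs c f g n + \<beta> * Qs c f g' n)"
proof
  fix n
  have gg: "(\<lambda>m. \<alpha> * g m + \<beta> * g' m) \<in> lw w" by (rule lw_lin[OF g g'])
  show "Qs c f (\<lambda>m. \<alpha> * g m + \<beta> * g' m) n = \<alpha> * Qs c f g n + \<beta> * Qs c f g' n"
    unfolding Qs_alt[OF c gg] Qs_alt[OF c g] Qs_alt[OF c g']
    by (cases "n = 0") (simp_all add: Ls_lin[OF c g g'] algebra_simps sum.distrib sum_distrib_left)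
qed

lemma Qs_lin_coef:
  assumes c: "cbound C c" and d: "cbound D d" and f: "f \<in> lw w" and g: "g \<in> lw w"
  shows "Qs (\<lambda>a b. \<alpha> * c a b + \<beta> * d a b) f g = (\<lambda>n. \<alpha> * Qs c f g n + \<beta> * Qs d f g n)"
proof
  fix n
  have cd: "cbound (\<bar>\<alpha>\<bar> * C + \<bar>\<beta>\<bar> * D) (\<lambda>a b. \<alpha> * c a b + \<beta> * d a b)" by (rule cbound_lin[OF c d])
  show "Qs (\<lambda>a b. \<alpha> * c a b + \<beta> * d a b) f g n = \<alpha> * Qs c f g n + \<beta> * Qs d f g n"
    unfolding Qs_alt[OF cd g] Qs_alt[OF c g] Qs_alt[OF d g]
    by (cases "n = 0") (simp_all add: Ls_lin_coef[OF c d g] algebra_simps sum.distrib sum_distrib_left)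
qed

definition Q :: "(nat \<Rightarrow> nat \<Rightarrow> real) \<Rightarrow> l1 \<Rightarrow> l1 \<Rightarrow> l1" where
  "Q c x y = tol1 (Qs c (ofl1 x) (ofl1 y))"

lemma ofl1_lin: "ofl1 (\<alpha> *\<^sub>R x + \<beta> *\<^sub>R y) = (\<lambda>m. \<alpha> * ofl1 x m + \<beta> * ofl1 y m)"
  by (rule tol1_eqI) (simp_all add: tol1_lin lw_lin)

lemma Q_norm:
  assumes c: "cbound C c" shows "norm (Q c x y) \<le> 3/2 * C * norm x * norm y"
  using Qs_lw_bound[OF c ofl1_lw ofl1_lw, of x y]
  by (simp add: Q_def norm_tol1 norm_tol1[OF ofl1_lw, symmetric])

lemma Q_lin_left:
  assumes c: "cbound C c"
  shows "Q c (\<alpha> *\<^sub>R x + \<beta> *\<^sub>R x') y = \<alpha> *\<^sub>R Q c x y + \<beta> *\<^sub>R Q c x' y"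
  unfolding Q_def ofl1_lin Qs_lin_left[OF c ofl1_lw ofl1_lw ofl1_lw]
  by (rule tol1_lin) (rule Qs_lw_bound[OF c ofl1_lw ofl1_lw])+

lemma Q_lin_right:
  assumes c: "cbound C c"
  shows "Q c x (\<alpha> *\<^sub>R y + \<beta> *\<^sub>R y') = \<alpha> *\<^sub>R Q c x y + \<beta> *\<^sub>R Q c x y'"
  unfolding Q_def ofl1_lin Qs_lin_right[OF c ofl1_lw ofl1_lw ofl1_lw]
  by (rule tol1_lin) (rule Qs_lw_bound[OF c ofl1_lw ofl1_lw])+

lemma Q_lin_coef:
  assumes c: "cbound C c" and d: "cbound D d"
  shows "Q (\<lambda>a b. \<alpha> * c a b + \<beta> * d a b) x y = \<alpha> *\<^sub>R Q c x y + \<beta> *\<^sub>R Q d x y"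
  unfolding Q_def Qs_lin_coef[OF c d ofl1_lw ofl1_lw]
  by (rule tol1_lin) (rule Qs_lw_bound[OF c ofl1_lw ofl1_lw] Qs_lw_bound[OF d ofl1_lw ofl1_lw])+

lemma Q_bilinear:
  assumes c: "cbound C c" shows "bounded_bilinear (Q c)"
proof
  show "Q c (a + a') b = Q c a b + Q c a' b" for a a' b using Q_lin_left[OF c, of 1 a 1 a' b] by simp
  show "Q c a (b + b') = Q c a b + Q c a b'" for a b b' using Q_lin_right[OF c, of a 1 b 1 b'] by simp
  show "Q c (r *\<^sub>R a) b = r *\<^sub>R Q c a b" for r a b using Q_lin_left[OF c, of r a 0 a b] by simp
  show "Q c a (r *\<^sub>R b) = r *\<^sub>R Q c a b" for r a b using Q_lin_right[OF c, of a r b 0 b] by simp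
  show "\<exists>K. \<forall>a b. norm (Q c a b) \<le> norm a * norm b * K"
    using Q_norm[OF c] by (intro exI[of _ "3/2 * C"]) (simp add: algebra_simps)
qed

lemma Q_diff_coef:
  assumes c: "cbound C c" and d: "cbound D d"
  shows "Q (\<lambda>a b. c a b - d a b) x y = Q c x y - Q d x y"
  using Q_lin_coef[OF c d, of 1 "-1" x y] by simp

lemma Q_scale_coef:
  assumes c: "cbound C c"
  shows "Q (\<lambda>a b. \<alpha> * c a b) x y = \<alpha> *\<^sub>R Q c x y"
  using Q_lin_coef[OF c c, of \<alpha> 0 x y] by simp

lemma Q_diff_sq:
  assumes c: "cbound C c"
  shows "Q c x x - Q c y y = Q c (x - y) x + Q c y (x - y)"
proof -
  interpret bounded_bilinear "Q c" by (rule Q_bilinear[OF c])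
  show ?thesis by (simp add: diff_left diff_right)
qed

lemma Q_diff_sq_bound:
  assumes c: "cbound C c"
  shows "norm (Q c x x - Q c y y) \<le> 3/2 * C * norm (x - y) * (norm x + norm y)"
proof -
  have "norm (Q c x x - Q c y y) \<le> norm (Q c (x - y) x) + norm (Q c y (x - y))"
    unfolding Q_diff_sq[OF c] by (rule norm_triangle_ineq)
  also have "\<dots> \<le> 3/2 * C * norm (x - y) * norm x + 3/2 * C * norm y * norm (x - y)"
    by (intro add_mono Q_norm[OF c])
  finally show ?thesis by (simp add: algebra_simps)
qed

lift_definition trunc :: "nat \<Rightarrow> l1 \<Rightarrow> l1" is "\<lambda>N f n. if n < N then f n else 0"
proof safe
  fix N and f :: "nat \<Rightarrow> real" assume "summable (\<lambda>n. \<bar>f n\<bar>)"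
  then show "summable (\<lambda>n. \<bar>if n < N then f n else 0\<bar>)"
    by (rule summable_comparison_test[rotated]) auto
qed auto

lemma cf_trunc: "cf (trunc N x) n = (if n < N then cf x n else 0)" by transfer simp

lemma norm_trunc_le: "norm (trunc N x) \<le> norm x"
proof -
  have s: "summable (\<lambda>n. \<bar>if n < N then cf x n else 0\<bar>)"
    by (rule summable_comparison_test[OF _ cf_summable[of x]]) (intro exI[of _ 0], auto)
  show ?thesis unfolding norm_l1_def' cf_trunc
    by (rule suminf_le[OF _ s cf_summable]) auto
qed

lemma norm_tail_tendsto: "(\<lambda>N. norm (x - trunc N x)) \<longlonglongrightarrow> 0"
proof (rule LIMSEQ_I)
  fix r :: real assume r: "r > 0"
  obtain N0 where N0: "\<forall>n\<ge>N0. norm (\<Sum>i. \<bar>cf x (i + n)\<bar>) < r"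
    using suminf_exist_split[OF r cf_summable] by blast
  show "\<exists>N0. \<forall>N\<ge>N0. norm (norm (x - trunc N x) - 0) < r"
  proof (intro exI allI impI)
    fix N assume "N \<ge> N0"
    have s: "summable (\<lambda>n. \<bar>cf (x - trunc N x) n\<bar>)" by (rule cf_summable)
    have "norm (x - trunc N x) = (\<Sum>i. \<bar>cf (x - trunc N x) (i + N)\<bar>) + (\<Sum>i<N. \<bar>cf (x - trunc N x) i\<bar>)"
      unfolding norm_l1_def' by (rule suminf_split_initial_segment[OF s])
    also have "\<dots> = (\<Sum>i. \<bar>cf x (i + N)\<bar>)" by (simp add: cf_trunc)
    finally show "norm (norm (x - trunc N x) - 0) < r" using N0 \<open>N \<ge> N0\<close> by simp
  qed
qed

lemma ofl1_trunc_zero: "m \<ge> N \<Longrightarrow> ofl1 (trunc N x) m = 0"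
  by (simp add: ofl1_def cf_trunc)

definition restr :: "nat \<Rightarrow> (nat \<Rightarrow> nat \<Rightarrow> real) \<Rightarrow> nat \<Rightarrow> nat \<Rightarrow> real" where
  "restr N c a b = (if a < N \<and> b < N then c a b else 0)"

lemma Qs_restr:
  assumes f: "\<And>m. m \<ge> N \<Longrightarrow> f m = 0" and g: "\<And>m. m \<ge> N \<Longrightarrow> g m = 0"
  shows "Qs c f g = Qs (restr N c) f g"
proof
  fix n
  have t1: "c (n - j) j * f (n - j) * g j = restr N c (n - j) j * f (n - j) * g j" for j
    using f[of "n - j"] g[of j] by (cases "n - j < N"; cases "j < N") (auto simp: restr_def)
  have t2: "c n (Suc j) * f n * g (Suc j) = restr N c n (Suc j) * f n * g (Suc j)" for j
    using f[of n] g[of "Suc j"] by (cases "n < N"; cases "Suc j < N") (auto simp: restr_def)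
  have e1: "(\<Sum>j\<in>{1..<n}. c (n - j) j * f (n - j) * g j) = (\<Sum>j\<in>{1..<n}. restr N c (n - j) j * f (n - j) * g j)"
    by (rule sum.cong[OF refl t1])
  have e2: "(\<Sum>j. c n (Suc j) * f n * g (Suc j)) = (\<Sum>j. restr N c n (Suc j) * f n * g (Suc j))"
    by (rule suminf_cong[OF t2])
  show "Qs c f g n = Qs (restr N c) f g n" unfolding Qs_def e1 e2 ..
qed

lemma Q_restr: "Q c (trunc N x) (trunc N y) = Q (restr N c) (trunc N x) (trunc N y)"
  unfolding Q_def by (subst Qs_restr[of N]) (auto simp: ofl1_trunc_zero)

lemma cbound_restr:
  assumes e: "e \<ge> 0" and small: "\<And>a b. a < N \<Longrightarrow> b < N \<Longrightarrow> \<bar>c a b\<bar> \<le> e"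
  shows "cbound (e * w (Suc (2 * N))) (restr N c)"
  unfolding cbound_def
proof (intro allI impI)
  fix a b :: nat assume ab: "1 \<le> a" "1 \<le> b"
  show "\<bar>restr N c a b\<bar> \<le> e * w (Suc (2 * N)) * w a * w b / w (a + b)"
  proof (cases "a < N \<and> b < N")
    case True
    have wa: "w a \<ge> 1" "w b \<ge> 1" using ab w_ge1 by auto
    have "w (a + b) \<le> w (Suc (2 * N))" using True ab by (intro w_mono) auto
    moreover have "w (a + b) > 0" using ab by simp
    ultimately have q: "1 \<le> w (Suc (2 * N)) / w (a + b)" by simp
    have p: "1 * 1 \<le> w a * w b" using wa by (intro mult_mono) auto
    have "w (Suc (2 * N)) / w (a + b) * 1 \<le> w (Suc (2 * N)) / w (a + b) * (w a * w b)"
      using p q by (intro mult_left_mono) auto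
    with q have "1 \<le> w (Suc (2 * N)) / w (a + b) * (w a * w b)" by simp
    then have "1 \<le> w (Suc (2 * N)) * w a * w b / w (a + b)" by (simp add: field_simps)
    then have "e * 1 \<le> e * (w (Suc (2 * N)) * w a * w b / w (a + b))" using e by (intro mult_left_mono) auto
    then show ?thesis using small[of a b] True by (simp add: restr_def mult.assoc)
  next
    case False
    have "0 \<le> e * w (Suc (2 * N)) * w a * w b / w (a + b)"
      using e ab by (intro divide_nonneg_pos mult_nonneg_nonneg) auto
    moreover have "restr N c a b = 0" using False unfolding restr_def by auto
    ultimately show ?thesis by simp
  qed
qed

end


context wgtm
begin

lemma trunc_diff: "trunc N (x - y) = trunc N x - trunc N y"
  by (rule cf_eqI) (simp add: cf_trunc)

lemma norm_cotrunc_le: "norm (x - trunc N x) \<le> norm x"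
proof -
  have s: "summable (\<lambda>n. \<bar>cf (x - trunc N x) n\<bar>)" by (rule cf_summable)
  show ?thesis unfolding norm_l1_def'
    by (rule suminf_le[OF _ s cf_summable]) (simp add: cf_trunc)
qed

lemma norm_cotrunc_mono: "N \<le> N' \<Longrightarrow> norm (x - trunc N' x) \<le> norm (x - trunc N x)"
  unfolding norm_l1_def'
  by (rule suminf_le[OF _ cf_summable cf_summable]) (simp add: cf_trunc)

lemma tails_compact:
  assumes K: "compact K" and eta: "\<eta> > 0"
  shows "\<exists>N. \<forall>x\<in>K. norm (x - trunc N x) \<le> \<eta>"
proof -
  have "K \<subseteq> (\<Union>c\<in>K. ball c (\<eta>/2))" using eta by auto
  then obtain C where C: "C \<subseteq> K" "finite C" "K \<subseteq> (\<Union>c\<in>C. ball c (\<eta>/2))"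
    using compactE_image[OF K, of K "\<lambda>c. ball c (\<eta>/2)"] by blast
  have "\<forall>c\<in>C. \<exists>N. norm (c - trunc N c) < \<eta>/2"
  proof
    fix c
    have "eventually (\<lambda>N. dist (norm (c - trunc N c)) 0 < \<eta>/2) sequentially"
      using tendstoD[OF norm_tail_tendsto[of c], of "\<eta>/2"] eta by simp
    then have "eventually (\<lambda>N. norm (c - trunc N c) < \<eta>/2) sequentially" by simp
    then show "\<exists>N. norm (c - trunc N c) < \<eta>/2" by (auto simp: eventually_sequentially)
  qed
  then obtain Nc where Nc: "\<And>c. c \<in> C \<Longrightarrow> norm (c - trunc (Nc c) c) < \<eta>/2" by metis
  define N where "N = Max (insert 0 (Nc ` C))"
  have NcN: "c \<in> C \<Longrightarrow> Nc c \<le> N" for c using C(2) by (auto simp: N_def)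
  show ?thesis
  proof (intro exI ballI)
    fix x assume "x \<in> K"
    then obtain c where c: "c \<in> C" "dist c x < \<eta>/2" using C(3) by auto
    have "norm (x - trunc N x) = norm ((x - c) - trunc N (x - c) + (c - trunc N c))"
      by (simp add: trunc_diff algebra_simps)
    also have "\<dots> \<le> norm ((x - c) - trunc N (x - c)) + norm (c - trunc N c)" by (rule norm_triangle_ineq)
    also have "\<dots> \<le> norm (x - c) + norm (c - trunc (Nc c) c)"
      by (intro add_mono norm_cotrunc_le norm_cotrunc_mono NcN c)
    also have "\<dots> \<le> \<eta>" using c Nc[OF c(1)] by (simp add: dist_norm norm_minus_commute)
    finally show "norm (x - trunc N x) \<le> \<eta>" .
  qed
qed

lemma Q_split_trunc:
  assumes c: "cbound C c"
  shows "Q c y y = Q c (trunc N y) (trunc N y) + Q c (y - trunc N y) y + Q c (trunc N y) (y - trunc N y)"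
proof -
  interpret bounded_bilinear "Q c" by (rule Q_bilinear[OF c])
  have "Q c y y = Q c (trunc N y + (y - trunc N y)) y" by simp
  also have "\<dots> = Q c (trunc N y) y + Q c (y - trunc N y) y" by (rule add_left)
  also have "Q c (trunc N y) y = Q c (trunc N y) (trunc N y + (y - trunc N y))" by simp
  also have "\<dots> = Q c (trunc N y) (trunc N y) + Q c (trunc N y) (y - trunc N y)" by (rule add_right)
  finally show ?thesis by (simp add: algebra_simps)
qed

lemma Q_small:
  fixes d :: "'h \<Rightarrow> 'p \<Rightarrow> nat \<Rightarrow> nat \<Rightarrow> real" and y :: "'p \<Rightarrow> l1"
  assumes D: "D \<ge> 0"
    and bnd: "eventually (\<lambda>h. \<forall>p\<in>P. cbound D (d h p)) F"
    and ybnd: "\<And>p. p \<in> P \<Longrightarrow> norm (y p) \<le> R"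
    and tails: "\<And>\<eta>. \<eta> > 0 \<Longrightarrow> \<exists>N. \<forall>p\<in>P. norm (y p - trunc N (y p)) \<le> \<eta>"
    and pt: "\<And>a b \<eta>. \<eta> > 0 \<Longrightarrow> eventually (\<lambda>h. \<forall>p\<in>P. \<bar>d h p a b\<bar> \<le> \<eta>) F"
    and eps: "\<epsilon> > 0"
  shows "eventually (\<lambda>h. \<forall>p\<in>P. norm (Q (d h p) (y p) (y p)) \<le> \<epsilon>) F"
proof -
  define R' where "R' = max R 0 + 1"
  have R': "R' > 0" "\<And>p. p \<in> P \<Longrightarrow> norm (y p) \<le> R'"
    using ybnd by (force simp: R'_def max_def)+
  define \<eta> where "\<eta> = \<epsilon> / (6 * (D + 1) * R')"
  have eta: "\<eta> > 0" using eps D R' by (simp add: \<eta>_def)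
  obtain N where N: "\<forall>p\<in>P. norm (y p - trunc N (y p)) \<le> \<eta>" using tails[OF eta] by blast
  define W where "W = w (Suc (2 * N))"
  have W: "W > 0" by (simp add: W_def)
  define e' where "e' = \<epsilon> / (3 * W * R'\<^sup>2)"
  have e': "e' > 0" using eps W R' by (simp add: e'_def)
  have ev1: "eventually (\<lambda>h. \<forall>ab\<in>{..<N} \<times> {..<N}. \<forall>p\<in>P. \<bar>d h p (fst ab) (snd ab)\<bar> \<le> e') F"
    by (rule eventually_ball_finite) (auto intro: pt[OF e'])
  show ?thesis
  proof (rule eventually_mono[OF eventually_conj[OF ev1 bnd]], intro ballI)
    fix h p assume H: "(\<forall>ab\<in>{..<N} \<times> {..<N}. \<forall>p\<in>P. \<bar>d h p (fst ab) (snd ab)\<bar> \<le> e') \<and> (\<forall>p\<in>P. cbound D (d h p))"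
      and p: "p \<in> P"
    let ?y = "y p" let ?t = "trunc N (y p)" let ?d = "d h p"
    have cd: "cbound D ?d" using H p by blast
    have cr: "cbound (e' * W) (restr N ?d)"
      unfolding W_def by (rule cbound_restr) (use e' H p in auto)
    have ny: "norm ?y \<le> R'" using R' p by blast
    have nt: "norm ?t \<le> R'" using norm_trunc_le[of N ?y] ny by linarith
    have tail: "norm (?y - ?t) \<le> \<eta>" using N p by blast
    have "norm (Q ?d ?y ?y) \<le> norm (Q ?d ?t ?t) + norm (Q ?d (?y - ?t) ?y) + norm (Q ?d ?t (?y - ?t))"
      unfolding Q_split_trunc[OF cd, of ?y N] by (rule norm_triangle_le, rule add_right_mono, rule norm_triangle_ineq)
    also have "norm (Q ?d ?t ?t) \<le> 3/2 * (e' * W) * R' * R'"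
    proof -
      have "norm (Q ?d ?t ?t) = norm (Q (restr N ?d) ?t ?t)" by (subst Q_restr) (rule refl)
      also have "\<dots> \<le> 3/2 * (e' * W) * norm ?t * norm ?t" by (rule Q_norm[OF cr])
      also have "\<dots> \<le> 3/2 * (e' * W) * R' * R'"
        using nt e' W R' by (intro mult_mono mult_left_mono) auto
      finally show ?thesis .
    qed
    also have "norm (Q ?d (?y - ?t) ?y) \<le> 3/2 * D * \<eta> * R'"
    proof -
      have "norm (Q ?d (?y - ?t) ?y) \<le> 3/2 * D * norm (?y - ?t) * norm ?y" by (rule Q_norm[OF cd])
      also have "\<dots> \<le> 3/2 * D * \<eta> * R'"
        using tail ny D eta by (intro mult_mono mult_left_mono) auto
      finally show ?thesis .
    qed
    also have "norm (Q ?d ?t (?y - ?t)) \<le> 3/2 * D * R' * \<eta>"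
    proof -
      have "norm (Q ?d ?t (?y - ?t)) \<le> 3/2 * D * norm ?t * norm (?y - ?t)" by (rule Q_norm[OF cd])
      also have "\<dots> \<le> 3/2 * D * R' * \<eta>"
        using tail nt D eta R' by (intro mult_mono mult_left_mono) auto
      finally show ?thesis .
    qed
    also have "3/2 * (e' * W) * R' * R' + 3/2 * D * \<eta> * R' + 3/2 * D * R' * \<eta> = \<epsilon>/2 + 3 * D * \<eta> * R'"
      using W R' by (simp add: e'_def power2_eq_square field_simps)
    also have "3 * D * \<eta> * R' \<le> \<epsilon>/2"
    proof -
      have D1: "D + 1 > 0" "1 + D \<noteq> 0" "R' \<noteq> 0" using D R' by auto
      have "3 * D * \<eta> * R' \<le> 3 * (D + 1) * \<eta> * R'"
        using eta R' by (intro mult_right_mono) auto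
      also have "3 * (D + 1) * \<eta> * R' = (\<eta> * (6 * (D + 1) * R')) / 2" by (simp add: algebra_simps)
      also have "\<eta> * (6 * (D + 1) * R') = \<epsilon>"
      proof -
        have X: "6 * (D + 1) * R' \<noteq> 0" using D1 by simp
        show ?thesis unfolding \<eta>_def using X by simp
      qed
      finally show ?thesis by simp
    qed
    finally show "norm (Q ?d ?y ?y) \<le> \<epsilon>" by simp
  qed
qed

end


lemma gronwall:
  fixes \<phi> :: "real \<Rightarrow> real"
  assumes cont: "continuous_on {0..a} \<phi>" and beta: "\<beta> \<ge> 0"
    and ineq: "\<And>t. t \<in> {0..a} \<Longrightarrow> \<phi> t \<le> \<alpha> + \<beta> * integral {0..t} \<phi>"
    and t: "t \<in> {0..a}"
  shows "\<phi> t \<le> \<alpha> * exp (\<beta> * t)"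
proof -
  define \<Phi> where "\<Phi> x = integral {0..x} \<phi>" for x
  define \<psi> where "\<psi> x = exp (- \<beta> * x) * (\<alpha> + \<beta> * \<Phi> x)" for x
  have dPhi: "(\<Phi> has_real_derivative \<phi> x) (at x within {0..a})" if "x \<in> {0..a}" for x
    unfolding \<Phi>_def by (rule integral_has_real_derivative[OF cont that])
  have dpsi: "(\<psi> has_real_derivative (exp (- \<beta> * x) * (\<beta> * \<phi> x) - \<beta> * exp (- \<beta> * x) * (\<alpha> + \<beta> * \<Phi> x))) (at x within {0..a})"
    if "x \<in> {0..a}" for x
    unfolding \<psi>_def
    by (rule derivative_eq_intros dPhi[OF that] refl | simp add: algebra_simps)+
  have cpsi: "continuous_on {0..t} \<psi>"
    by (rule continuous_on_subset[OF DERIV_continuous_on[OF dpsi]]) (use t in auto)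
  have "\<psi> t \<le> \<psi> 0"
  proof (rule DERIV_nonpos_imp_decreasing_open[OF _ _ cpsi])
    show "0 \<le> t" using t by simp
    fix x assume x: "0 < x" "x < t"
    then have xa: "x \<in> {0..a}" using t by auto
    have "at x within {0..a} = at x" using x t by (intro at_within_Icc_at) auto
    then have d: "DERIV \<psi> x :> (exp (- \<beta> * x) * (\<beta> * \<phi> x) - \<beta> * exp (- \<beta> * x) * (\<alpha> + \<beta> * \<Phi> x))"
      using dpsi[OF xa] by simp
    have "\<beta> * \<phi> x \<le> \<beta> * (\<alpha> + \<beta> * \<Phi> x)" by (rule mult_left_mono) (use ineq[OF xa] beta in \<open>auto simp: \<Phi>_def\<close>)
    then have "exp (- \<beta> * x) * (\<beta> * \<phi> x) \<le> exp (- \<beta> * x) * (\<beta> * (\<alpha> + \<beta> * \<Phi> x))"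
      by (rule mult_left_mono) auto
    then have "exp (- \<beta> * x) * (\<beta> * \<phi> x) - \<beta> * exp (- \<beta> * x) * (\<alpha> + \<beta> * \<Phi> x) \<le> 0"
      by (simp add: algebra_simps)
    with d show "\<exists>y. DERIV \<psi> x :> y \<and> y \<le> 0" by blast
  qed
  also have "\<psi> 0 = \<alpha>" by (simp add: \<psi>_def \<Phi>_def)
  finally have "exp (- \<beta> * t) * (\<alpha> + \<beta> * \<Phi> t) \<le> \<alpha>" by (simp add: \<psi>_def)
  then have "\<alpha> + \<beta> * \<Phi> t \<le> \<alpha> * exp (\<beta> * t)"
    by (simp add: exp_minus field_simps)
  then show ?thesis using ineq[OF t] by (simp add: \<Phi>_def)
qed

lemma norm_integral_le:
  fixes f :: "real \<Rightarrow> 'a::banach"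
  assumes "continuous_on {a..b} f" "continuous_on {a..b} g" "\<And>x. x \<in> {a..b} \<Longrightarrow> norm (f x) \<le> g x"
  shows "norm (integral {a..b} f) \<le> integral {a..b} g"
  by (rule integral_norm_bound_integral[OF integrable_continuous_interval integrable_continuous_interval]) (use assms in auto)


lemma ev_within: "(\<And>x. x \<in> A \<Longrightarrow> P x) \<Longrightarrow> eventually P (at a within A)"
  by (simp add: eventually_at_filter)

context sgrp
begin

lemma T_lin_simps:
  assumes "t \<ge> 0"
  shows "T t (x + y) = T t x + T t y" "T t (x - y) = T t x - T t y" "T t (c *\<^sub>R x) = c *\<^sub>R T t x"
    "T t 0 = 0"
  using T_linear[OF assms] by (simp_all add: linear_simps)

lemma T_cont_comp:
  assumes "\<And>s. s \<in> A \<Longrightarrow> c - s \<ge> 0"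
  shows "continuous_on A (\<lambda>s. T (c - s) x)"
proof -
  have "continuous_on A (\<lambda>s. c - s)" by (intro continuous_intros)
  moreover have "(\<lambda>s. c - s) ` A \<subseteq> {0..}" using assms by auto
  ultimately show ?thesis
    using continuous_on_compose2[OF T_contin[of x]] by blast
qed

lemma T_joint_cont:
  assumes g: "continuous_on {a..b} g" and bc: "b \<le> c"
  shows "continuous_on {a..b} (\<lambda>s. T (c - s) (g s))"
proof (cases "a \<le> b")
  case False then show ?thesis by simp
next
  case True
  obtain M where M: "M > 0" "\<forall>t\<in>{0..c - a}. \<forall>x. norm (T t x) \<le> M * norm x"
    using T_bound[of "c - a"] True bc by auto
  show ?thesis unfolding continuous_on_def
  proof
    fix s0 assume s0: "s0 \<in> {a..b}"
    have 1: "((\<lambda>s. T (c - s) (g s0)) \<longlongrightarrow> T (c - s0) (g s0)) (at s0 within {a..b})"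
      using T_cont_comp[of "{a..b}" c "g s0"] bc s0 unfolding continuous_on_def by auto
    have 2: "((\<lambda>s. T (c - s) (g s - g s0)) \<longlongrightarrow> 0) (at s0 within {a..b})"
    proof (rule Lim_null_comparison)
      show "eventually (\<lambda>s. norm (T (c - s) (g s - g s0)) \<le> M * norm (g s - g s0)) (at s0 within {a..b})"
        by (rule ev_within) (use M bc in auto)
      have "((\<lambda>s. g s - g s0) \<longlongrightarrow> 0) (at s0 within {a..b})"
        using g s0 unfolding continuous_on_def by (simp add: LIM_zero)
      then show "((\<lambda>s. M * norm (g s - g s0)) \<longlongrightarrow> 0) (at s0 within {a..b})"
        using tendsto_mult_right_zero tendsto_norm_zero by blast
    qed
    have "((\<lambda>s. T (c - s) (g s - g s0) + T (c - s) (g s0)) \<longlongrightarrow> 0 + T (c - s0) (g s0)) (at s0 within {a..b})"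
      by (rule tendsto_add[OF 2 1])
    moreover have "eventually (\<lambda>s. T (c - s) (g s - g s0) + T (c - s) (g s0) = T (c - s) (g s)) (at s0 within {a..b})"
      by (rule ev_within) (use bc in \<open>auto simp: T_lin_simps\<close>)
    ultimately show "((\<lambda>s. T (c - s) (g s)) \<longlongrightarrow> T (c - s0) (g s0)) (at s0 within {a..b})"
      by (simp add: tendsto_cong)
  qed
qed

lemma T_avg:
  assumes g: "continuous_on {a..a+\<delta>} g" and a: "a \<ge> 0" and d: "\<delta> > 0"
  shows "((\<lambda>h. (1/h) *\<^sub>R integral {a..a+h} (\<lambda>s. T (a + h - s) (g s))) \<longlongrightarrow> g a) (at_right 0)"
proof (rule tendstoI)
  fix \<epsilon> :: real assume e: "\<epsilon> > 0"
  obtain M where M: "M > 0" "\<forall>t\<in>{0..\<delta>}. \<forall>x. norm (T t x) \<le> M * norm x"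
    using T_bound[of \<delta>] d by auto
  obtain d1 where d1: "d1 > 0" "\<forall>s\<in>{a..a+\<delta>}. dist s a < d1 \<longrightarrow> dist (g s) (g a) < \<epsilon> / (4 * M)"
    using g a d e M unfolding continuous_on_iff by (metis atLeastAtMost_iff divide_pos_pos le_add_same_cancel1 less_eq_real_def mult_pos_pos zero_less_numeral order_refl)
  obtain d2 where d2: "d2 > 0" "\<forall>r\<in>{0..}. 0 < dist r 0 \<and> dist r 0 < d2 \<longrightarrow> dist (T r (g a)) (g a) < \<epsilon> / 4"
    using T_cont[of 0 "g a"] e unfolding Lim_within T_0 by (metis zero_less_divide_iff zero_less_numeral order_refl)
  define d0 where "d0 = min \<delta> (min d1 d2)"
  have d0: "d0 > 0" using d d1 d2 by (simp add: d0_def)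
  show "eventually (\<lambda>h. dist ((1/h) *\<^sub>R integral {a..a+h} (\<lambda>s. T (a + h - s) (g s))) (g a) < \<epsilon>) (at_right 0)"
  proof (rule eventually_at_rightI[OF _ d0])
    fix h assume h: "h \<in> {0<..<d0}"
    then have h0: "h > 0" and hd: "h < \<delta>" "h < d1" "h < d2" by (auto simp: d0_def)
    have gc: "continuous_on {a..a+h} g" by (rule continuous_on_subset[OF g]) (use hd in auto)
    have ic: "continuous_on {a..a+h} (\<lambda>s. T (a + h - s) (g s))" by (rule T_joint_cont[OF gc]) simp
    have bound: "norm (T (a + h - s) (g s) - g a) \<le> \<epsilon>/2" if s: "s \<in> {a..a+h}" for s
    proof -
      have r: "a + h - s \<in> {0..\<delta>}" using s hd by auto
      have "norm (T (a + h - s) (g s) - g a) = norm (T (a + h - s) (g s - g a) + (T (a + h - s) (g a) - g a))"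
        using r by (simp add: T_lin_simps)
      also have "\<dots> \<le> norm (T (a + h - s) (g s - g a)) + norm (T (a + h - s) (g a) - g a)"
        by (rule norm_triangle_ineq)
      also have "norm (T (a + h - s) (g s - g a)) \<le> M * norm (g s - g a)" using M r by blast
      also have "\<dots> \<le> M * (\<epsilon> / (4 * M))"
      proof -
        have "dist (g s) (g a) < \<epsilon> / (4 * M)" using d1 s hd by (auto simp: dist_real_def)
        then show ?thesis using M by (intro mult_left_mono) (auto simp: dist_norm)
      qed
      also have "norm (T (a + h - s) (g a) - g a) \<le> \<epsilon>/4"
      proof (cases "a + h - s = 0")
        case True then show ?thesis using e by (simp add: T_0)
      next
        case False
        then have "dist (T (a + h - s) (g a)) (g a) < \<epsilon>/4" using d2 r s hd by (auto simp: dist_real_def)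
        then show ?thesis by (simp add: dist_norm)
      qed
      finally show ?thesis using M by (simp add: field_simps)
    qed
    have "integral {a..a+h} (\<lambda>s. T (a + h - s) (g s)) - h *\<^sub>R g a = integral {a..a+h} (\<lambda>s. T (a + h - s) (g s) - g a)"
    proof -
      have "integral {a..a+h} (\<lambda>s. T (a + h - s) (g s) - g a) = integral {a..a+h} (\<lambda>s. T (a + h - s) (g s)) - integral {a..a+h} (\<lambda>s. g a)"
        by (rule integral_diff[OF integrable_continuous_interval[OF ic] integrable_const[of _ a "a+h", simplified]])
      then show ?thesis using h0 by simp
    qed
    then have eq: "(1/h) *\<^sub>R integral {a..a+h} (\<lambda>s. T (a + h - s) (g s)) - g a = (1/h) *\<^sub>R integral {a..a+h} (\<lambda>s. T (a + h - s) (g s) - g a)"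
      using h0 by (simp add: algebra_simps)
    have "norm (integral {a..a+h} (\<lambda>s. T (a + h - s) (g s) - g a)) \<le> \<epsilon>/2 * (a + h - a)"
      by (rule integral_bound) (use h0 bound in \<open>auto intro!: continuous_intros ic\<close>)
    then have "norm ((1/h) *\<^sub>R integral {a..a+h} (\<lambda>s. T (a + h - s) (g s) - g a)) \<le> \<epsilon>/2"
      using h0 by (simp add: field_simps)
    moreover have "dist ((1/h) *\<^sub>R integral {a..a+h} (\<lambda>s. T (a + h - s) (g s))) (g a) = norm ((1/h) *\<^sub>R integral {a..a+h} (\<lambda>s. T (a + h - s) (g s) - g a))"
      unfolding dist_norm eq ..
    ultimately show "dist ((1/h) *\<^sub>R integral {a..a+h} (\<lambda>s. T (a + h - s) (g s))) (g a) < \<epsilon>"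
      using e by linarith
  qed
qed

end


lemma Qs_zero0: "Qs (\<lambda>n j. if n = 0 \<or> j = 0 then 0 else c n j) f g = Qs c f g"
proof
  fix n
  have e1: "(\<Sum>j\<in>{1..<n}. (if n - j = 0 \<or> j = 0 then 0 else c (n - j) j) * f (n - j) * g j) = (\<Sum>j\<in>{1..<n}. c (n - j) j * f (n - j) * g j)"
    by (rule sum.cong) auto
  show "Qs (\<lambda>n j. if n = 0 \<or> j = 0 then 0 else c n j) f g n = Qs c f g n"
    unfolding Qs_def e1 by simp
qed

context wgtm
begin

lemma Q_small_single:
  fixes d :: "'h \<Rightarrow> nat \<Rightarrow> nat \<Rightarrow> real"
  assumes D: "D \<ge> 0" and bnd: "eventually (\<lambda>h. cbound D (d h)) F"
    and pt: "\<And>a b \<eta>. \<eta> > 0 \<Longrightarrow> eventually (\<lambda>h. \<bar>d h a b\<bar> \<le> \<eta>) F"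
  shows "((\<lambda>h. Q (d h) y y) \<longlongrightarrow> 0) F"
proof (rule tendstoI)
  fix \<epsilon> :: real assume e: "\<epsilon> > 0"
  have "eventually (\<lambda>h. \<forall>p\<in>(UNIV::unit set). norm (Q (d h) y y) \<le> \<epsilon>/2) F"
  proof (rule Q_small[where y="\<lambda>_. y" and d="\<lambda>h _. d h" and R="norm y", OF D])
    show "eventually (\<lambda>h. \<forall>p\<in>UNIV. cbound D (d h)) F" using bnd by simp
    show "\<exists>N. \<forall>p\<in>UNIV. norm (y - trunc N y) \<le> \<eta>" if "\<eta> > 0" for \<eta>
    proof -
      have "eventually (\<lambda>N. dist (norm (y - trunc N y)) 0 < \<eta>) sequentially"
        using tendstoD[OF norm_tail_tendsto[of y] that] .
      then obtain N where "dist (norm (y - trunc N y)) 0 < \<eta>" by (auto simp: eventually_sequentially)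
      then have "norm (y - trunc N y) \<le> \<eta>" by simp
      then show ?thesis by blast
    qed
    show "eventually (\<lambda>h. \<forall>p\<in>UNIV. \<bar>d h a b\<bar> \<le> \<eta>) F" if "\<eta> > 0" for a b \<eta> using pt[OF that] by simp
  qed (use e in auto)
  then show "eventually (\<lambda>h. dist (Q (d h) y y) 0 < \<epsilon>) F"
    by eventually_elim (use e in auto)
qed

end

locale mainloc = sgrp + wgtm +
  fixes k kd :: "nat \<Rightarrow> nat \<Rightarrow> real \<Rightarrow> real" and Tend :: ereal
    and u0 g0 :: "nat \<Rightarrow> real" and u :: "real \<Rightarrow> nat \<Rightarrow> real" and tmax :: ereal
  assumes k_cont: "\<And>n j. n \<ge> 1 \<Longrightarrow> j \<ge> 1 \<Longrightarrow> continuous_on {t. 0 \<le> t \<and> ereal t < Tend} (k n j)"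
    and k_nonneg: "\<And>n j t. n \<ge> 1 \<Longrightarrow> j \<ge> 1 \<Longrightarrow> 0 \<le> t \<Longrightarrow> ereal t < Tend \<Longrightarrow> k n j t \<ge> 0"
    and CI: "\<And>t'. 0 < t' \<Longrightarrow> ereal t' < Tend \<Longrightarrow> \<exists>c>0. \<forall>n\<ge>1. \<forall>j\<ge>1. \<forall>t\<in>{0..t'}.
               k n j t \<le> c * w n * w j / w (n + j)"
    and k_deriv: "\<And>n j t. n \<ge> 1 \<Longrightarrow> j \<ge> 1 \<Longrightarrow> 0 \<le> t \<Longrightarrow> ereal t < Tend \<Longrightarrow>
               (k n j has_real_derivative kd n j t) (at t within {s. 0 \<le> s \<and> ereal s < Tend})"
    and kd_cont: "\<And>n j. n \<ge> 1 \<Longrightarrow> j \<ge> 1 \<Longrightarrow> continuous_on {t. 0 \<le> t \<and> ereal t < Tend} (kd n j)"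
    and kd_bound: "\<And>t'. 0 < t' \<Longrightarrow> ereal t' < Tend \<Longrightarrow> \<exists>c>0. \<forall>n\<ge>1. \<forall>j\<ge>1. \<forall>t\<in>{0..t'}.
               \<bar>kd n j t\<bar> \<le> c * w n * w j / w (n + j)"
    and tmax_pos: "0 < tmax" and tmax_le: "tmax \<le> Tend"
    and u_mild: "mild_solution w S k u0 tmax u"
    and u0_gen: "(u0, g0) \<in> P" and u0_lw: "u0 \<in> lw w" and g0_lw: "g0 \<in> lw w"
begin

definition Dm :: "real set" where "Dm = {t. 0 \<le> t \<and> ereal t < tmax}"
definition U :: "real \<Rightarrow> l1" where "U t = tol1 (u t)"
definition kq :: "real \<Rightarrow> nat \<Rightarrow> nat \<Rightarrow> real" where
  "kq s n j = (if n = 0 \<or> j = 0 then 0 else k n j s)"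
definition kdq :: "real \<Rightarrow> nat \<Rightarrow> nat \<Rightarrow> real" where
  "kdq s n j = (if n = 0 \<or> j = 0 then 0 else kd n j s)"
definition F :: "real \<Rightarrow> l1" where "F s = Q (kq s) (U s) (U s)"

lemma Dm_sub: "Dm \<subseteq> {t. 0 \<le> t \<and> ereal t < Tend}"
  using tmax_le by (auto simp: Dm_def)

lemma Dm_iv: "t \<in> Dm \<Longrightarrow> 0 \<le> s \<Longrightarrow> s \<le> t \<Longrightarrow> s \<in> Dm"
  by (auto simp: Dm_def) (meson ereal_less_eq(3) le_less_trans)

lemma Dm_ivs: "t \<in> Dm \<Longrightarrow> {0..t} \<subseteq> Dm"
  using Dm_iv by auto

lemma Dm_0: "0 \<in> Dm" using tmax_pos by (simp add: Dm_def zero_ereal_def)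

lemma Dm_above: "t \<in> Dm \<Longrightarrow> \<exists>t2. t < t2 \<and> t2 \<in> Dm"
proof -
  assume t: "t \<in> Dm"
  then obtain z where "ereal t < ereal z" "ereal z < tmax" using ereal_dense2[of "ereal t" tmax] by (auto simp: Dm_def)
  then show ?thesis using t by (auto simp: Dm_def intro!: exI[of _ z])
qed

lemma mild_parts:
  shows u_lw: "t \<in> Dm \<Longrightarrow> u t \<in> lw w"
    and u_cont: "t0 \<in> Dm \<Longrightarrow> lw_tendsto w u (u t0) (at t0 within Dm)"
    and u_eq: "t \<in> Dm \<Longrightarrow> u t n = S t u0 n + integral {0..t} (\<lambda>s. S (t - s) (opK k s (u s)) n)"
  using u_mild unfolding mild_solution_def Dm_def by blast+

lemma U_cont: "continuous_on Dm U"
  unfolding continuous_on_def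
proof
  fix t0 assume t0: "t0 \<in> Dm"
  have ev: "eventually (\<lambda>t. u t \<in> lw w) (at t0 within Dm)"
    by (rule ev_within) (rule u_lw)
  show "(U \<longlongrightarrow> U t0) (at t0 within Dm)"
    using u_cont[OF t0] lw_tendsto_iff[OF ev u_lw[OF t0]] by (simp add: U_def[abs_def])
qed

lemma u_0: "u 0 = u0"
proof
  fix n
  have "u 0 n = S 0 u0 n" using u_eq[OF Dm_0, of n] by simp
  also have "S 0 u0 = u0" using gen u0_lw unfolding C0_semigroup_gen_def by blast
  finally show "u 0 n = u0 n" .
qed

lemma U_0: "U 0 = tol1 u0" by (simp add: U_def u_0)

lemma kq_bound:
  assumes "t2 \<in> Dm" "t2 > 0"
  shows "\<exists>c>0. \<forall>s\<in>{0..t2}. cbound c (kq s)"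
proof -
  have "ereal t2 < Tend" using assms Dm_sub by auto
  then obtain c where c: "c > 0" "\<forall>n\<ge>1. \<forall>j\<ge>1. \<forall>t\<in>{0..t2}. k n j t \<le> c * w n * w j / w (n + j)"
    using CI[of t2] assms by auto
  have "cbound c (kq s)" if s: "s \<in> {0..t2}" for s
    unfolding cbound_def
  proof (intro allI impI)
    fix n j :: nat assume nj: "1 \<le> n" "1 \<le> j"
    have "s \<in> Dm" using s assms Dm_iv by auto
    then have "k n j s \<ge> 0" using k_nonneg nj Dm_sub by auto
    then show "\<bar>kq s n j\<bar> \<le> c * w n * w j / w (n + j)" using c s nj by (auto simp: kq_def)
  qed
  then show ?thesis using c by blast
qed

lemma kdq_bound:
  assumes "t2 \<in> Dm" "t2 > 0"
  shows "\<exists>c>0. \<forall>s\<in>{0..t2}. cbound c (kdq s)"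
proof -
  have "ereal t2 < Tend" using assms Dm_sub by auto
  then obtain c where c: "c > 0" "\<forall>n\<ge>1. \<forall>j\<ge>1. \<forall>t\<in>{0..t2}. \<bar>kd n j t\<bar> \<le> c * w n * w j / w (n + j)"
    using kd_bound[of t2] assms by auto
  have "cbound c (kdq s)" if s: "s \<in> {0..t2}" for s
    unfolding cbound_def using c s by (auto simp: kdq_def)
  then show ?thesis using c by blast
qed

lemma kq_bound_at:
  assumes "s \<in> Dm" shows "\<exists>c>0. cbound c (kq s)"
proof -
  obtain t2 where "s < t2" "t2 \<in> Dm" using Dm_above[OF assms] by blast
  moreover have "s \<ge> 0" using assms by (simp add: Dm_def)
  ultimately show ?thesis using kq_bound[of t2] by force
qed

lemma opK_kq: "opK k s f = Qs (kq s) f f"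
  unfolding opK_Qs kq_def[abs_def] by (rule Qs_zero0[symmetric])

lemma opK_lw: "s \<in> Dm \<Longrightarrow> opK k s (u s) \<in> lw w"
  using kq_bound_at[of s] Qs_lw_bound(1) u_lw by (auto simp: opK_kq)

lemma F_tol1: "s \<in> Dm \<Longrightarrow> F s = tol1 (opK k s (u s))"
  by (simp add: F_def Q_def U_def u_lw opK_kq)

lemma F_cont: "continuous_on Dm F"
  unfolding continuous_on_def
proof
  fix s0 assume s0: "s0 \<in> Dm"
  obtain t2 where t2: "s0 < t2" "t2 \<in> Dm" using Dm_above[OF s0] by blast
  have s00: "s0 \<ge> 0" using s0 by (simp add: Dm_def)
  obtain c where c: "c > 0" "\<forall>s\<in>{0..t2}. cbound c (kq s)" using kq_bound[OF t2(2)] t2 s00 by auto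
  let ?L = "at s0 within Dm"
  have evt2: "eventually (\<lambda>s. s < t2) ?L"
    using order_tendstoD(2)[OF tendsto_ident_at t2(1)] .
  have evD: "eventually (\<lambda>s. s \<in> Dm) ?L" by (rule ev_within) simp
  have evc: "eventually (\<lambda>s. cbound c (kq s)) ?L"
    using evt2 evD by eventually_elim (use c in \<open>auto simp: Dm_def\<close>)
  have Uc: "(U \<longlongrightarrow> U s0) ?L" using U_cont s0 unfolding continuous_on_def by blast
  have p1: "((\<lambda>s. Q (kq s) (U s) (U s) - Q (kq s) (U s0) (U s0)) \<longlongrightarrow> 0) ?L"
  proof (rule Lim_null_comparison)
    show "eventually (\<lambda>s. norm (Q (kq s) (U s) (U s) - Q (kq s) (U s0) (U s0)) \<le> 3/2 * c * norm (U s - U s0) * (norm (U s) + norm (U s0))) ?L"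
      using evc by eventually_elim (rule Q_diff_sq_bound)
    have "((\<lambda>s. 3/2 * c * norm (U s - U s0) * (norm (U s) + norm (U s0))) \<longlongrightarrow> 3/2 * c * norm (U s0 - U s0) * (norm (U s0) + norm (U s0))) ?L"
      by (intro tendsto_intros Uc)
    then show "((\<lambda>s. 3/2 * c * norm (U s - U s0) * (norm (U s) + norm (U s0))) \<longlongrightarrow> 0) ?L" by simp
  qed
  have p2: "((\<lambda>s. Q (\<lambda>n j. kq s n j - kq s0 n j) (U s0) (U s0)) \<longlongrightarrow> 0) ?L"
  proof (rule Q_small_single[where D="2 * c"])
    show "eventually (\<lambda>s. cbound (2 * c) (\<lambda>n j. kq s n j - kq s0 n j)) ?L"
      using evc
    proof eventually_elim
      case (elim s)
      have "cbound c (kq s0)" using c s00 t2 by auto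
      from cbound_lin[OF elim this, of 1 "-1"] show ?case by simp
    qed
    show "eventually (\<lambda>s. \<bar>kq s a b - kq s0 a b\<bar> \<le> \<eta>) ?L" if "\<eta> > 0" for a b \<eta>
    proof (cases "a = 0 \<or> b = 0")
      case True then show ?thesis using that by (simp add: kq_def)
    next
      case False
      then have "continuous_on Dm (k a b)" using continuous_on_subset[OF k_cont Dm_sub] by simp
      then have "(k a b \<longlongrightarrow> k a b s0) ?L" using s0 unfolding continuous_on_def by blast
      then have "eventually (\<lambda>s. dist (k a b s) (k a b s0) < \<eta>) ?L" using that by (rule tendstoD)
      then show ?thesis by (rule eventually_mono) (use False in \<open>simp add: kq_def dist_real_def\<close>)
    qed
  qed (use c in simp)
  have "((\<lambda>s. (Q (kq s) (U s) (U s) - Q (kq s) (U s0) (U s0)) + Q (\<lambda>n j. kq s n j - kq s0 n j) (U s0) (U s0)) \<longlongrightarrow> 0 + 0) ?L"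
    by (rule tendsto_add[OF p1 p2])
  moreover have "eventually (\<lambda>s. (Q (kq s) (U s) (U s) - Q (kq s) (U s0) (U s0)) + Q (\<lambda>n j. kq s n j - kq s0 n j) (U s0) (U s0) = F s - F s0) ?L"
    using evc
  proof eventually_elim
    case (elim s)
    have "cbound c (kq s0)" using c s00 t2 by auto
    then show ?case by (simp add: F_def Q_diff_coef[OF elim])
  qed
  ultimately have "((\<lambda>s. F s - F s0) \<longlongrightarrow> 0) ?L" by (simp add: tendsto_cong)
  then show "(F \<longlongrightarrow> F s0) ?L" by (simp add: LIM_zero_iff)
qed

end


context mainloc
begin

lemma F_cont_sub: "t \<in> Dm \<Longrightarrow> continuous_on {0..t} F"
  by (rule continuous_on_subset[OF F_cont Dm_ivs])

lemma cf_integral: "f integrable_on A \<Longrightarrow> cf (integral A f) n = integral A (\<lambda>s. cf (f s) n)"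
  using integral_linear[OF _ bounded_linear_cf, of f A n] by (simp add: o_def)

lemma U_mild: assumes t: "t \<in> Dm"
  shows "U t = T t (U 0) + integral {0..t} (\<lambda>s. T (t - s) (F s))"
proof (rule cf_eqI)
  fix n
  have t0: "t \<ge> 0" using t by (simp add: Dm_def)
  have ic: "continuous_on {0..t} (\<lambda>s. T (t - s) (F s))" by (rule T_joint_cont[OF F_cont_sub[OF t]]) simp
  have int: "(\<lambda>s. T (t - s) (F s)) integrable_on {0..t}" by (rule integrable_continuous_interval[OF ic])
  have c1: "cf (T t (U 0)) n = (if n = 0 then 0 else w n * S t u0 n)"
    using t0 by (simp add: U_0 T_S u0_lw cf_tol1 S_lw)
  have c2: "cf (T (t - s) (F s)) n = (if n = 0 then 0 else w n * S (t - s) (opK k s (u s)) n)" if s: "s \<in> {0..t}" for s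
  proof -
    have sD: "s \<in> Dm" using Dm_iv[OF t] s by auto
    show ?thesis using s by (simp add: F_tol1[OF sD] T_S opK_lw[OF sD] cf_tol1 S_lw)
  qed
  have "cf (integral {0..t} (\<lambda>s. T (t - s) (F s))) n = integral {0..t} (\<lambda>s. cf (T (t - s) (F s)) n)"
    by (rule cf_integral[OF int])
  also have "\<dots> = integral {0..t} (\<lambda>s. if n = 0 then 0 else w n * S (t - s) (opK k s (u s)) n)"
    by (rule integral_cong) (rule c2)
  finally have c3: "cf (integral {0..t} (\<lambda>s. T (t - s) (F s))) n = (if n = 0 then 0 else w n * integral {0..t} (\<lambda>s. S (t - s) (opK k s (u s)) n))"
    using integral_cmul[where c="w n" and f="\<lambda>s. S (t - s) (opK k s (u s)) n" and S="{0..t}"] by simp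
  show "cf (U t) n = cf (T t (U 0) + integral {0..t} (\<lambda>s. T (t - s) (F s))) n"
    using c1 c3 u_eq[OF t, of n] by (simp add: U_def cf_tol1 u_lw[OF t] algebra_simps)
qed

lemma U_shift:
  assumes a: "a \<ge> 0" and h: "h \<ge> 0" and ah: "a + h \<in> Dm"
  shows "U (a + h) = T h (U a) + integral {a..a+h} (\<lambda>s. T (a + h - s) (F s))"
proof -
  have aD: "a \<in> Dm" using Dm_iv[OF ah a] h by simp
  define f where "f = (\<lambda>s. T (a + h - s) (F s))"
  have fc: "continuous_on {0..a+h} f" unfolding f_def by (rule T_joint_cont[OF F_cont_sub[OF ah]]) simp
  have fi: "f integrable_on {0..a+h}" by (rule integrable_continuous_interval[OF fc])
  have gc: "continuous_on {0..a} (\<lambda>s. T (a - s) (F s))" by (rule T_joint_cont[OF F_cont_sub[OF aD]]) simp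
  have gi: "(\<lambda>s. T (a - s) (F s)) integrable_on {0..a}" by (rule integrable_continuous_interval[OF gc])
  have split: "integral {0..a+h} f = integral {0..a} f + integral {a..a+h} f"
    using Henstock_Kurzweil_Integration.integral_combine[OF a _ fi] h by simp
  have e1: "integral {0..a} f = integral {0..a} (\<lambda>s. T h (T (a - s) (F s)))"
  proof (rule integral_cong)
    fix s assume s: "s \<in> {0..a}"
    have "T (a + h - s) = T (h + (a - s))" by (rule arg_cong[where f=T]) simp
    moreover have "T (h + (a - s)) (F s) = T h (T (a - s) (F s))" by (rule T_add) (use s h in auto)
    ultimately show "f s = T h (T (a - s) (F s))" by (simp add: f_def)
  qed
  also have "\<dots> = T h (integral {0..a} (\<lambda>s. T (a - s) (F s)))"
    using integral_linear[OF gi T_linear[OF h]] by (simp add: o_def)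
  finally have e1': "integral {0..a} f = T h (integral {0..a} (\<lambda>s. T (a - s) (F s)))" .
  have "U (a + h) = T (a + h) (U 0) + integral {0..a+h} f" using U_mild[OF ah] by (simp add: f_def)
  also have "T (a + h) (U 0) = T h (T a (U 0))" using T_add[OF h a] by (simp add: add.commute)
  also have "integral {0..a+h} f = T h (integral {0..a} (\<lambda>s. T (a - s) (F s))) + integral {a..a+h} f"
    using split e1' by simp
  also have "T h (T a (U 0)) + (T h (integral {0..a} (\<lambda>s. T (a - s) (F s))) + integral {a..a+h} f)
      = T h (U a) + integral {a..a+h} f"
    using U_mild[OF aD] h by (simp add: T_lin_simps)
  finally show ?thesis by (simp add: f_def)
qed

definition Dq :: "real \<Rightarrow> real \<Rightarrow> l1" where "Dq h t = (1/h) *\<^sub>R (U (t + h) - U t)"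

definition V0 :: l1 where "V0 = tol1 g0 + F 0"

lemma Dq0_tendsto: "((\<lambda>h. Dq h 0) \<longlongrightarrow> V0) (at_right 0)"
proof -
  obtain h0 where h0: "0 < h0" "h0 \<in> Dm" using Dm_above[OF Dm_0] by blast
  have g: "((\<lambda>h. (1/h) *\<^sub>R (T h (tol1 u0) - tol1 u0)) \<longlongrightarrow> tol1 g0) (at_right 0)"
    using generator[OF u0_lw g0_lw] u0_gen by simp
  have a: "((\<lambda>h. (1/h) *\<^sub>R integral {0..0+h} (\<lambda>s. T (0 + h - s) (F s))) \<longlongrightarrow> F 0) (at_right 0)"
    by (rule T_avg) (use F_cont_sub[OF h0(2)] h0 in auto)
  have "((\<lambda>h. (1/h) *\<^sub>R (T h (tol1 u0) - tol1 u0) + (1/h) *\<^sub>R integral {0..0+h} (\<lambda>s. T (0 + h - s) (F s))) \<longlongrightarrow> V0) (at_right 0)"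
    unfolding V0_def by (rule tendsto_add[OF g a])
  moreover have "eventually (\<lambda>h. (1/h) *\<^sub>R (T h (tol1 u0) - tol1 u0) + (1/h) *\<^sub>R integral {0..0+h} (\<lambda>s. T (0 + h - s) (F s)) = Dq h 0) (at_right 0)"
  proof (rule eventually_at_rightI[OF _ h0(1)])
    fix h assume h: "h \<in> {0<..<h0}"
    then have hD: "0 + h \<in> Dm" using Dm_iv[OF h0(2)] by auto
    have "U (0 + h) = T h (U 0) + integral {0..0+h} (\<lambda>s. T (0 + h - s) (F s))"
      by (rule U_shift) (use h hD in auto)
    then show "(1/h) *\<^sub>R (T h (tol1 u0) - tol1 u0) + (1/h) *\<^sub>R integral {0..0+h} (\<lambda>s. T (0 + h - s) (F s)) = Dq h 0"
      by (simp add: Dq_def U_0 algebra_simps)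
  qed
  ultimately show ?thesis by (simp add: tendsto_cong)
qed

definition Dl :: "real \<Rightarrow> real \<Rightarrow> l1" where "Dl h s = (1/h) *\<^sub>R (F (s + h) - F s)"

lemma Dq_formula:
  assumes t: "t \<ge> 0" and h: "h > 0" and th: "t + h \<in> Dm"
  shows "Dq h t = T t (Dq h 0) + integral {0..t} (\<lambda>s. T (t - s) (Dl h s))"
proof -
  have tD: "t \<in> Dm" using Dm_iv[OF th t] h by simp
  have hD: "h \<in> Dm" using Dm_iv[OF th] t h by simp
  have c1: "continuous_on {0..t} (\<lambda>s. T (t - s) (F s))" by (rule T_joint_cont[OF F_cont_sub[OF tD]]) simp
  have Fh: "continuous_on {0..t} (\<lambda>s. F (s + h))"
  proof -
    have "continuous_on {0..t} (\<lambda>s. s + h)" by (intro continuous_intros)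
    moreover have "(\<lambda>s. s + h) ` {0..t} \<subseteq> Dm" using Dm_iv[OF th] h by auto
    ultimately show ?thesis using continuous_on_compose2[OF F_cont] by blast
  qed
  have c2: "continuous_on {0..t} (\<lambda>s. T (t - s) (F (s + h)))" by (rule T_joint_cont[OF Fh]) simp
  have "U (h + t) = T t (U h) + integral {h..h+t} (\<lambda>s. T (h + t - s) (F s))"
    by (rule U_shift) (use h t th in \<open>auto simp: add.commute\<close>)
  also have "integral {h..h+t} (\<lambda>s. T (h + t - s) (F s)) = integral {0..t} (\<lambda>s. T (t - s) (F (s + h)))"
  proof -
    have "integral {0..t} ((\<lambda>s. T (h + t - s) (F s)) \<circ> (+) h) = integral {0+h..t+h} (\<lambda>s. T (h + t - s) (F s))"
      by (rule integral_shift_Icc_real)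
    then show ?thesis by (simp add: o_def add.commute)
  qed
  finally have e1: "U (t + h) = T t (U h) + integral {0..t} (\<lambda>s. T (t - s) (F (s + h)))" by (simp add: add.commute)
  have e2: "U t = T t (U 0) + integral {0..t} (\<lambda>s. T (t - s) (F s))" by (rule U_mild[OF tD])
  have "U (t + h) - U t = T t (U h - U 0) + (integral {0..t} (\<lambda>s. T (t - s) (F (s + h))) - integral {0..t} (\<lambda>s. T (t - s) (F s)))"
    using e1 e2 t by (simp add: T_lin_simps algebra_simps)
  also have "integral {0..t} (\<lambda>s. T (t - s) (F (s + h))) - integral {0..t} (\<lambda>s. T (t - s) (F s)) = integral {0..t} (\<lambda>s. T (t - s) (F (s + h) - F s))"
    by (subst integral_diff[OF integrable_continuous_interval[OF c2] integrable_continuous_interval[OF c1], symmetric])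
       (rule integral_cong, simp add: T_lin_simps)
  finally have e3: "U (t + h) - U t = T t (U h - U 0) + integral {0..t} (\<lambda>s. T (t - s) (F (s + h) - F s))" .
  have "Dq h t = T t ((1/h) *\<^sub>R (U h - U 0)) + (1/h) *\<^sub>R integral {0..t} (\<lambda>s. T (t - s) (F (s + h) - F s))"
    unfolding Dq_def e3 using t by (simp add: T_lin_simps scaleR_add_right)
  also have "(1/h) *\<^sub>R integral {0..t} (\<lambda>s. T (t - s) (F (s + h) - F s)) = integral {0..t} (\<lambda>s. T (t - s) (Dl h s))"
    by (subst integral_cmul[symmetric]) (rule integral_cong, simp add: Dl_def T_lin_simps)
  finally show ?thesis by (simp add: Dq_def)
qed

end


context mainloc
begin

lemma k_mvt:
  assumes nj: "n \<noteq> 0" "j \<noteq> 0" and s: "0 \<le> s" and h: "0 < h" and sh: "s + h \<in> Dm"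
  shows "\<exists>\<xi>\<in>{s<..<s+h}. k n j (s + h) - k n j s = h * kd n j \<xi>"
proof -
  have "\<exists>\<xi>\<in>{s<..<s+h}. k n j (s + h) - k n j s = (\<lambda>y. kd n j \<xi> * y) (s + h - s)"
  proof (rule mvt_simple)
    show "s < s + h" using h by simp
    fix x assume x: "s \<le> x" "x \<le> s + h"
    then have xD: "x \<in> Dm" using Dm_iv[OF sh] s by auto
    then have "(k n j has_real_derivative kd n j x) (at x within {t. 0 \<le> t \<and> ereal t < Tend})"
      using k_deriv[of n j x] nj Dm_sub by auto
    then have "(k n j has_real_derivative kd n j x) (at x within {s..s+h})"
    proof (rule DERIV_subset)
      show "{s..s+h} \<subseteq> {t. 0 \<le> t \<and> ereal t < Tend}"
      proof
        fix y assume "y \<in> {s..s+h}"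
        then have "y \<in> Dm" using Dm_iv[OF sh] s by auto
        then show "y \<in> {t. 0 \<le> t \<and> ereal t < Tend}" using Dm_sub by blast
      qed
    qed
    then show "(k n j has_derivative (\<lambda>y. kd n j x * y)) (at x within {s..s+h})"
      by (simp add: has_field_derivative_def)
  qed
  then show ?thesis by (auto simp: mult.commute)
qed

end

locale win = mainloc +
  fixes t1 t2 c cd M R :: real
  assumes t2D: "t2 \<in> Dm" and t1pos: "0 < t1" and t12: "t1 < t2"
    and cpos: "c > 0" and cbnd: "\<And>s. s \<in> {0..t2} \<Longrightarrow> cbound c (kq s)"
    and cdpos: "cd > 0" and cdbnd: "\<And>s. s \<in> {0..t2} \<Longrightarrow> cbound cd (kdq s)"
    and Mpos: "M > 0" and Mbnd: "\<And>t x. t \<in> {0..t2} \<Longrightarrow> norm (T t x) \<le> M * norm x"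
    and Rpos: "R > 0" and Rbnd: "\<And>s. s \<in> {0..t2} \<Longrightarrow> norm (U s) \<le> R"
begin

lemma t2_sub: "{0..t2} \<subseteq> Dm" by (rule Dm_ivs[OF t2D])

lemma U_cont2: "continuous_on {0..t2} U" by (rule continuous_on_subset[OF U_cont t2_sub])
lemma F_cont2: "continuous_on {0..t2} F" by (rule continuous_on_subset[OF F_cont t2_sub])

definition eh :: "real \<Rightarrow> real \<Rightarrow> nat \<Rightarrow> nat \<Rightarrow> real" where
  "eh h s n j = (kq (s + h) n j - kq s n j) / h"

lemma eh_mvt:
  assumes s: "0 \<le> s" and h: "0 < h" and sh: "s + h \<le> t2" and nj: "n \<noteq> 0" "j \<noteq> 0"
  shows "\<exists>\<xi>\<in>{s<..<s+h}. eh h s n j = kd n j \<xi>"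
proof -
  have "s + h \<in> Dm" using t2_sub s h sh by auto
  then obtain \<xi> where "\<xi> \<in> {s<..<s+h}" "k n j (s + h) - k n j s = h * kd n j \<xi>"
    using k_mvt[OF nj s h] by blast
  then show ?thesis using h nj by (auto simp: eh_def kq_def)
qed

lemma eh_bound:
  assumes s: "0 \<le> s" and h: "0 < h" and sh: "s + h \<le> t2"
  shows "cbound cd (eh h s)"
  unfolding cbound_def
proof (intro allI impI)
  fix n j :: nat assume nj: "1 \<le> n" "1 \<le> j"
  then have nj': "n \<noteq> 0" "j \<noteq> 0" by auto
  obtain \<xi> where xi: "\<xi> \<in> {s<..<s+h}" "eh h s n j = kd n j \<xi>" using eh_mvt[OF s h sh nj'] by blast
  have "\<xi> \<in> {0..t2}" using xi s sh by auto
  then have "cbound cd (kdq \<xi>)" by (rule cdbnd)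
  then show "\<bar>eh h s n j\<bar> \<le> cd * w n * w j / w (n + j)"
    using xi nj unfolding cbound_def by (auto simp: kdq_def)
qed

lemma kq_eh: "h \<noteq> 0 \<Longrightarrow> kq (s + h) n j - kq s n j = h * eh h s n j"
  by (simp add: eh_def)

definition G :: "real \<Rightarrow> real \<Rightarrow> l1" where "G h s = Q (eh h s) (U (s + h)) (U (s + h))"

lemma Dl_decomp:
  assumes s: "0 \<le> s" and h: "0 < h" and sh: "s + h \<le> t2"
  shows "Dl h s = G h s + Q (kq s) (Dq h s) (U (s + h)) + Q (kq s) (U s) (Dq h s)"
proof -
  have cs: "cbound c (kq s)" using cbnd s sh h by auto
  have csh: "cbound c (kq (s + h))" using cbnd s sh h by auto
  have ce: "cbound cd (eh h s)" by (rule eh_bound[OF s h sh])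
  interpret B: bounded_bilinear "Q (kq s)" by (rule Q_bilinear[OF cs])
  let ?x = "U (s + h)" and ?y = "U s"
  have "Q (kq (s + h)) ?x ?x - Q (kq s) ?x ?x = Q (\<lambda>n j. kq (s + h) n j - kq s n j) ?x ?x"
    by (rule Q_diff_coef[OF csh cs, symmetric])
  also have "\<dots> = Q (\<lambda>n j. h * eh h s n j) ?x ?x" using h by (simp add: kq_eh)
  also have "\<dots> = h *\<^sub>R G h s" unfolding G_def by (rule Q_scale_coef[OF ce])
  finally have e1: "Q (kq (s + h)) ?x ?x - Q (kq s) ?x ?x = h *\<^sub>R G h s" .
  have xy: "?x - ?y = h *\<^sub>R Dq h s" using h by (simp add: Dq_def)
  have e2: "Q (kq s) ?x ?x - Q (kq s) ?y ?y = h *\<^sub>R (Q (kq s) (Dq h s) ?x + Q (kq s) ?y (Dq h s))"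
    unfolding Q_diff_sq[OF cs] xy by (simp add: B.scaleR_left B.scaleR_right scaleR_add_right)
  have "F (s + h) - F s = h *\<^sub>R G h s + h *\<^sub>R (Q (kq s) (Dq h s) ?x + Q (kq s) ?y (Dq h s))"
    unfolding F_def using e1 e2 by (simp add: algebra_simps)
  then show ?thesis using h by (simp add: Dl_def scaleR_add_right)
qed

lemma G_bound:
  assumes s: "0 \<le> s" and h: "0 < h" and sh: "s + h \<le> t2"
  shows "norm (G h s) \<le> 3/2 * cd * R * R"
proof -
  have "norm (G h s) \<le> 3/2 * cd * norm (U (s + h)) * norm (U (s + h))"
    unfolding G_def by (rule Q_norm[OF eh_bound[OF s h sh]])
  also have "\<dots> \<le> 3/2 * cd * R * R"
    using Rbnd[of "s + h"] s h sh cdpos Rpos by (intro mult_mono mult_left_mono) auto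
  finally show ?thesis .
qed

lemma Dl_bound:
  assumes s: "0 \<le> s" and h: "0 < h" and sh: "s + h \<le> t2"
  shows "norm (Dl h s) \<le> 3/2 * cd * R * R + 3 * c * R * norm (Dq h s)"
proof -
  have cs: "cbound c (kq s)" using cbnd s sh h by auto
  have R1: "norm (U (s + h)) \<le> R" "norm (U s) \<le> R" using Rbnd s h sh by auto
  have "norm (Dl h s) \<le> norm (G h s) + norm (Q (kq s) (Dq h s) (U (s + h))) + norm (Q (kq s) (U s) (Dq h s))"
    unfolding Dl_decomp[OF s h sh] by (rule norm_triangle_le, rule add_right_mono, rule norm_triangle_ineq)
  also have "norm (Q (kq s) (Dq h s) (U (s + h))) \<le> 3/2 * c * norm (Dq h s) * R"
  proof -
    have "3/2 * c * norm (Dq h s) * norm (U (s + h)) \<le> 3/2 * c * norm (Dq h s) * R"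
      by (rule mult_left_mono) (use R1 cpos in auto)
    then show ?thesis using Q_norm[OF cs, of "Dq h s" "U (s + h)"] by linarith
  qed
  also have "norm (Q (kq s) (U s) (Dq h s)) \<le> 3/2 * c * R * norm (Dq h s)"
  proof -
    have "3/2 * c * norm (U s) * norm (Dq h s) \<le> 3/2 * c * R * norm (Dq h s)"
      by (intro mult_right_mono mult_left_mono) (use R1 cpos in auto)
    then show ?thesis using Q_norm[OF cs, of "U s" "Dq h s"] by linarith
  qed
  also note G_bound[OF s h sh]
  finally show ?thesis by (simp add: algebra_simps)
qed

lemma Dq_cont:
  assumes h: "0 < h" "h \<le> t2 - t1"
  shows "continuous_on {0..t1} (Dq h)"
proof -
  have "continuous_on {0..t1} (\<lambda>t. U (t + h))"
    by (rule continuous_on_compose2[OF U_cont2]) (use h in \<open>auto intro!: continuous_intros\<close>)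
  moreover have "continuous_on {0..t1} U" by (rule continuous_on_subset[OF U_cont2]) (use t12 in auto)
  ultimately show ?thesis unfolding Dq_def[abs_def] by (intro continuous_intros)
qed

lemma Dl_cont:
  assumes h: "0 < h" "h \<le> t2 - t1"
  shows "continuous_on {0..t1} (Dl h)"
proof -
  have "continuous_on {0..t1} (\<lambda>t. F (t + h))"
    by (rule continuous_on_compose2[OF F_cont2]) (use h in \<open>auto intro!: continuous_intros\<close>)
  moreover have "continuous_on {0..t1} F" by (rule continuous_on_subset[OF F_cont2]) (use t12 in auto)
  ultimately show ?thesis unfolding Dl_def[abs_def] by (intro continuous_intros)
qed

lemma Dq_formula':
  assumes t: "t \<in> {0..t1}" and h: "0 < h" "h \<le> t2 - t1"
  shows "Dq h t = T t (Dq h 0) + integral {0..t} (\<lambda>s. T (t - s) (Dl h s))"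
  by (rule Dq_formula) (use t h t2_sub in auto)

lemma int_term_bound:
  assumes t: "t \<in> {0..t1}" and h: "0 < h" "h \<le> t2 - t1"
    and gc: "continuous_on {0..t1} g"
    and gb: "\<And>s. s \<in> {0..t1} \<Longrightarrow> norm (X s) \<le> g s"
    and Xc: "continuous_on {0..t1} X"
  shows "norm (integral {0..t} (\<lambda>s. T (t - s) (X s))) \<le> M * integral {0..t} g"
proof -
  have Xc': "continuous_on {0..t} X" by (rule continuous_on_subset[OF Xc]) (use t in auto)
  have gc': "continuous_on {0..t} g" by (rule continuous_on_subset[OF gc]) (use t in auto)
  have "norm (integral {0..t} (\<lambda>s. T (t - s) (X s))) \<le> integral {0..t} (\<lambda>s. M * g s)"
  proof (rule norm_integral_le)
    show "continuous_on {0..t} (\<lambda>s. T (t - s) (X s))" by (rule T_joint_cont[OF Xc']) simp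
    show "continuous_on {0..t} (\<lambda>s. M * g s)" by (intro continuous_intros gc')
    fix s assume s: "s \<in> {0..t}"
    have "norm (T (t - s) (X s)) \<le> M * norm (X s)" using Mbnd[of "t - s"] s t t12 by auto
    also have "\<dots> \<le> M * g s" using gb[of s] s t Mpos by (intro mult_left_mono) auto
    finally show "norm (T (t - s) (X s)) \<le> M * g s" .
  qed
  also have "\<dots> = M * integral {0..t} g"
    using integral_cmul[where c=M and f=g and S="{0..t}"] by simp
  finally show ?thesis .
qed

end


lemma integral_affine:
  fixes \<phi> :: "real \<Rightarrow> real"
  assumes c: "continuous_on {0..t} \<phi>" and t: "t \<ge> 0"
  shows "integral {0..t} (\<lambda>s. A + B * \<phi> s) = A * t + B * integral {0..t} \<phi>"
proof -
  have i1: "(\<lambda>s. A) integrable_on {0..t}" by (rule integrable_const_ivl)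
  have i2: "(\<lambda>s. B * \<phi> s) integrable_on {0..t}"
    by (rule integrable_continuous_interval) (intro continuous_intros c)
  have "integral {0..t} (\<lambda>s. A + B * \<phi> s) = integral {0..t} (\<lambda>s. A) + integral {0..t} (\<lambda>s. B * \<phi> s)"
    by (rule Henstock_Kurzweil_Integration.integral_add[OF i1 i2])
  also have "integral {0..t} (\<lambda>s. B * \<phi> s) = B * integral {0..t} \<phi>"
    using integral_cmul[where c=B and f=\<phi> and S="{0..t}"] by simp
  finally show ?thesis using t by (simp add: mult.commute)
qed

context win
begin

lemma U_unif: "uniformly_continuous_on {0..t2} U"
  by (rule compact_uniformly_continuous[OF U_cont2]) simp

lemma U_unif_eps:
  assumes e: "\<eta> > 0"
  shows "\<exists>d>0. \<forall>a\<in>{0..t2}. \<forall>b\<in>{0..t2}. \<bar>a - b\<bar> < d \<longrightarrow> norm (U a - U b) < \<eta>"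
  using U_unif e unfolding uniformly_continuous_on_def by (fastforce simp: dist_norm dist_real_def)

lemma Dq_bounded:
  "\<exists>L \<delta>0. L > 0 \<and> \<delta>0 > 0 \<and> \<delta>0 \<le> t2 - t1 \<and> (\<forall>h. 0 < h \<and> h < \<delta>0 \<longrightarrow> (\<forall>t\<in>{0..t1}. norm (Dq h t) \<le> L))"
proof -
  have "eventually (\<lambda>h. dist (Dq h 0) V0 < 1) (at_right 0)"
    using tendstoD[OF Dq0_tendsto, of 1] by simp
  then obtain \<delta>a where da: "\<delta>a > 0" "\<forall>h>0. h < \<delta>a \<longrightarrow> dist (Dq h 0) V0 < 1"
    unfolding eventually_at_right_field by auto
  define \<delta>0 where "\<delta>0 = min \<delta>a (t2 - t1)"
  define \<alpha> where "\<alpha> = M * (norm V0 + 1) + M * (3/2 * cd * R * R) * t1"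
  define \<beta> where "\<beta> = M * (3 * c * R)"
  define L where "L = \<alpha> * exp (\<beta> * t1) + 1"
  have al: "\<alpha> \<ge> 0" using Mpos cdpos Rpos t1pos by (simp add: \<alpha>_def)
  have be: "\<beta> \<ge> 0" using Mpos cpos Rpos by (simp add: \<beta>_def)
  have "norm (Dq h t) \<le> L" if h: "0 < h" "h < \<delta>0" and t: "t \<in> {0..t1}" for h t
  proof -
    have hh: "0 < h" "h \<le> t2 - t1" using h by (auto simp: \<delta>0_def)
    have D0: "norm (Dq h 0) \<le> norm V0 + 1"
      using da h norm_triangle_ineq2[of "Dq h 0" V0] by (auto simp: \<delta>0_def dist_norm)
    define \<phi> where "\<phi> t = norm (Dq h t)" for t
    have phic: "continuous_on {0..t1} \<phi>" unfolding \<phi>_def[abs_def] by (intro continuous_intros Dq_cont[OF hh])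
    have ineq: "\<phi> t \<le> \<alpha> + \<beta> * integral {0..t} \<phi>" if t: "t \<in> {0..t1}" for t
    proof -
      have t0: "t \<ge> 0" "t \<le> t1" using t by auto
      have "\<phi> t = norm (T t (Dq h 0) + integral {0..t} (\<lambda>s. T (t - s) (Dl h s)))"
        unfolding \<phi>_def by (subst Dq_formula'[OF t hh]) rule
      also have "\<dots> \<le> norm (T t (Dq h 0)) + norm (integral {0..t} (\<lambda>s. T (t - s) (Dl h s)))"
        by (rule norm_triangle_ineq)
      also have "norm (T t (Dq h 0)) \<le> M * (norm V0 + 1)"
        using Mbnd[of t "Dq h 0"] t t12 D0 Mpos by (smt (verit) atLeastAtMost_iff mult_left_mono)
      also have "norm (integral {0..t} (\<lambda>s. T (t - s) (Dl h s))) \<le> M * integral {0..t} (\<lambda>s. 3/2 * cd * R * R + 3 * c * R * \<phi> s)"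
      proof (rule int_term_bound[OF t hh])
        show "continuous_on {0..t1} (\<lambda>s. 3/2 * cd * R * R + 3 * c * R * \<phi> s)" by (intro continuous_intros phic)
        show "continuous_on {0..t1} (Dl h)" by (rule Dl_cont[OF hh])
        fix s assume s: "s \<in> {0..t1}"
        show "norm (Dl h s) \<le> 3/2 * cd * R * R + 3 * c * R * \<phi> s"
          unfolding \<phi>_def by (rule Dl_bound) (use s hh in auto)
      qed
      also have "integral {0..t} (\<lambda>s. 3/2 * cd * R * R + 3 * c * R * \<phi> s) = 3/2 * cd * R * R * t + 3 * c * R * integral {0..t} \<phi>"
        by (rule integral_affine) (use continuous_on_subset[OF phic] t0 in auto)
      also have "M * (norm V0 + 1) + M * (3/2 * cd * R * R * t + 3 * c * R * integral {0..t} \<phi>) \<le> \<alpha> + \<beta> * integral {0..t} \<phi>"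
      proof -
        have "M * (3/2 * cd * R * R) * t \<le> M * (3/2 * cd * R * R) * t1"
          using t0 Mpos cdpos Rpos by (intro mult_left_mono) auto
        then show ?thesis by (simp add: \<alpha>_def \<beta>_def algebra_simps)
      qed
      finally show ?thesis by simp
    qed
    have "\<phi> t \<le> \<alpha> * exp (\<beta> * t)" by (rule gronwall[OF phic be ineq t])
    also have "\<dots> \<le> \<alpha> * exp (\<beta> * t1)" using t be al by (intro mult_left_mono) (auto intro: mult_left_mono)
    finally show ?thesis by (simp add: \<phi>_def L_def)
  qed
  moreover have "L > 0" using al by (simp add: L_def add_nonneg_pos)
  moreover have "\<delta>0 > 0" "\<delta>0 \<le> t2 - t1" using da t12 by (auto simp: \<delta>0_def)
  ultimately show ?thesis by blast
qed

definition G0 :: "real \<Rightarrow> l1" where "G0 s = Q (kdq s) (U s) (U s)"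

lemma kd_unif:
  assumes nj: "a \<noteq> 0" "b \<noteq> 0" and e: "\<eta> > 0"
  shows "\<exists>d>0. \<forall>x\<in>{0..t2}. \<forall>y\<in>{0..t2}. \<bar>x - y\<bar> < d \<longrightarrow> \<bar>kd a b x - kd a b y\<bar> < \<eta>"
proof -
  have "continuous_on {0..t2} (kd a b)"
    by (rule continuous_on_subset[OF kd_cont]) (use nj t2_sub Dm_sub in auto)
  then have "uniformly_continuous_on {0..t2} (kd a b)" by (rule compact_uniformly_continuous) simp
  then show ?thesis using e unfolding uniformly_continuous_on_def by (fastforce simp: dist_real_def)
qed

lemma G_unif:
  assumes e: "\<epsilon> > 0"
  shows "eventually (\<lambda>h. \<forall>s\<in>{0..t1}. norm (G h s - G0 s) \<le> \<epsilon>) (at_right 0)"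
proof -
  define \<eta> where "\<eta> = \<epsilon> / (6 * cd * R)"
  have eta: "\<eta> > 0" using e cdpos Rpos by (simp add: \<eta>_def)
  obtain du where du: "du > 0" "\<forall>a\<in>{0..t2}. \<forall>b\<in>{0..t2}. \<bar>a - b\<bar> < du \<longrightarrow> norm (U a - U b) < \<eta>"
    using U_unif_eps[OF eta] by blast
  have evh: "eventually (\<lambda>h. 0 < h \<and> h < min du (t2 - t1)) (at_right 0)"
    unfolding eventually_at_right_field using du t12 by (intro exI[of _ "min du (t2 - t1)"]) auto
  have partB: "eventually (\<lambda>h. \<forall>s\<in>{0..t1}. norm (Q (\<lambda>n j. eh h s n j - kdq s n j) (U s) (U s)) \<le> \<epsilon>/2) (at_right 0)"
  proof (rule Q_small[where D="2 * cd" and R=R])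
    show "2 * cd \<ge> 0" using cdpos by simp
    show "eventually (\<lambda>h. \<forall>s\<in>{0..t1}. cbound (2 * cd) (\<lambda>n j. eh h s n j - kdq s n j)) (at_right 0)"
      using evh
    proof eventually_elim
      case (elim h)
      show ?case
      proof
        fix s assume s: "s \<in> {0..t1}"
        have c1: "cbound cd (eh h s)" by (rule eh_bound) (use elim s in auto)
        have c2: "cbound cd (kdq s)" by (rule cdbnd) (use s t12 in auto)
        show "cbound (2 * cd) (\<lambda>n j. eh h s n j - kdq s n j)" using cbound_lin[OF c1 c2, of 1 "-1"] by simp
      qed
    qed
    show "norm (U s) \<le> R" if "s \<in> {0..t1}" for s using Rbnd that t12 by auto
    show "\<exists>N. \<forall>s\<in>{0..t1}. norm (U s - trunc N (U s)) \<le> \<eta>'" if "\<eta>' > 0" for \<eta>'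
    proof -
      have "compact (U ` {0..t1})"
        by (rule compact_continuous_image[OF continuous_on_subset[OF U_cont2]]) (use t12 in auto)
      from tails_compact[OF this that] show ?thesis by auto
    qed
    show "eventually (\<lambda>h. \<forall>s\<in>{0..t1}. \<bar>eh h s a b - kdq s a b\<bar> \<le> \<eta>') (at_right 0)" if eta': "\<eta>' > 0" for a b \<eta>'
    proof (cases "a = 0 \<or> b = 0")
      case True
      then show ?thesis using eta' by (auto simp: eh_def kq_def kdq_def)
    next
      case False
      then have ab: "a \<noteq> 0" "b \<noteq> 0" by auto
      obtain d where d: "d > 0" "\<forall>x\<in>{0..t2}. \<forall>y\<in>{0..t2}. \<bar>x - y\<bar> < d \<longrightarrow> \<bar>kd a b x - kd a b y\<bar> < \<eta>'"
        using kd_unif[OF ab eta'] by blast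
      have ev2: "eventually (\<lambda>h. 0 < h \<and> h < min d (t2 - t1)) (at_right 0)"
        unfolding eventually_at_right_field using d t12 by (intro exI[of _ "min d (t2 - t1)"]) auto
      show ?thesis using ev2
      proof eventually_elim
        case (elim h)
        show ?case
        proof
          fix s assume s: "s \<in> {0..t1}"
          obtain \<xi> where xi: "\<xi> \<in> {s<..<s+h}" "eh h s a b = kd a b \<xi>"
            using eh_mvt[of s h a b] s elim False t12 by auto
          have "\<bar>kd a b \<xi> - kd a b s\<bar> < \<eta>'"
            using d(2) xi s elim t12 by auto
          then show "\<bar>eh h s a b - kdq s a b\<bar> \<le> \<eta>'" using xi False by (simp add: kdq_def)
        qed
      qed
    qed
    show "\<epsilon>/2 > 0" using e by simp
  qed
  show ?thesis using partB evh
  proof eventually_elim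
    case (elim h)
    show ?case
    proof
      fix s assume s: "s \<in> {0..t1}"
      have hh: "0 < h" "h < du" "h < t2 - t1" using elim by auto
      have c1: "cbound cd (eh h s)" by (rule eh_bound) (use hh s in auto)
      have c2: "cbound cd (kdq s)" by (rule cdbnd) (use s t12 in auto)
      have sp: "G h s - G0 s = (Q (eh h s) (U (s + h)) (U (s + h)) - Q (eh h s) (U s) (U s)) + Q (\<lambda>n j. eh h s n j - kdq s n j) (U s) (U s)"
        by (simp add: G_def G0_def Q_diff_coef[OF c1 c2])
      have "norm (Q (eh h s) (U (s + h)) (U (s + h)) - Q (eh h s) (U s) (U s)) \<le> 3/2 * cd * norm (U (s + h) - U s) * (norm (U (s + h)) + norm (U s))"
        by (rule Q_diff_sq_bound[OF c1])
      also have "\<dots> \<le> 3/2 * cd * \<eta> * (R + R)"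
      proof -
        have "norm (U (s + h) - U s) < \<eta>" using du(2) s hh t12 by auto
        moreover have "norm (U (s + h)) + norm (U s) \<le> R + R" using Rbnd s hh t12 by (intro add_mono) auto
        ultimately show ?thesis using cdpos eta by (intro mult_mono mult_left_mono) auto
      qed
      also have "\<dots> = \<epsilon>/2" using cdpos Rpos by (simp add: \<eta>_def field_simps)
      finally have A: "norm (Q (eh h s) (U (s + h)) (U (s + h)) - Q (eh h s) (U s) (U s)) \<le> \<epsilon>/2" .
      have B: "norm (Q (\<lambda>n j. eh h s n j - kdq s n j) (U s) (U s)) \<le> \<epsilon>/2" using elim s by blast
      show "norm (G h s - G0 s) \<le> \<epsilon>" unfolding sp using norm_triangle_ineq[of "Q (eh h s) (U (s + h)) (U (s + h)) - Q (eh h s) (U s) (U s)" "Q (\<lambda>n j. eh h s n j - kdq s n j) (U s) (U s)"] A B by linarith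
    qed
  qed
qed

end


context win
begin

lemma Dq_diff_formula:
  assumes t: "t \<in> {0..t1}" and h: "0 < h" "h \<le> t2 - t1" and h': "0 < h'" "h' \<le> t2 - t1"
  shows "Dq h t - Dq h' t = T t (Dq h 0 - Dq h' 0) + integral {0..t} (\<lambda>s. T (t - s) (Dl h s - Dl h' s))"
proof -
  have t0: "t \<ge> 0" "t \<le> t1" using t by auto
  have c1: "continuous_on {0..t} (\<lambda>s. T (t - s) (Dl h s))"
    by (rule T_joint_cont[OF continuous_on_subset[OF Dl_cont[OF h]]]) (use t0 in auto)
  have c2: "continuous_on {0..t} (\<lambda>s. T (t - s) (Dl h' s))"
    by (rule T_joint_cont[OF continuous_on_subset[OF Dl_cont[OF h']]]) (use t0 in auto)
  have "integral {0..t} (\<lambda>s. T (t - s) (Dl h s - Dl h' s)) = integral {0..t} (\<lambda>s. T (t - s) (Dl h s) - T (t - s) (Dl h' s))"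
    by (rule integral_cong) (simp add: T_lin_simps)
  also have "\<dots> = integral {0..t} (\<lambda>s. T (t - s) (Dl h s)) - integral {0..t} (\<lambda>s. T (t - s) (Dl h' s))"
    by (rule integral_diff[OF integrable_continuous_interval[OF c1] integrable_continuous_interval[OF c2]])
  finally show ?thesis
    using Dq_formula'[OF t h] Dq_formula'[OF t h'] t0 by (simp add: T_lin_simps algebra_simps)
qed

lemma Dq_cauchy:
  assumes e: "\<epsilon> > 0"
  shows "\<exists>\<delta>>0. \<forall>h h'. 0 < h \<and> h < \<delta> \<and> 0 < h' \<and> h' < \<delta> \<longrightarrow> (\<forall>t\<in>{0..t1}. norm (Dq h t - Dq h' t) \<le> \<epsilon>)"
proof -
  obtain L \<delta>0 where L: "L > 0" "\<delta>0 > 0" "\<delta>0 \<le> t2 - t1"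
    and Lb: "\<And>h t. 0 < h \<Longrightarrow> h < \<delta>0 \<Longrightarrow> t \<in> {0..t1} \<Longrightarrow> norm (Dq h t) \<le> L"
    using Dq_bounded by blast
  define \<beta> where "\<beta> = M * (3 * c * R)"
  define K where "K = exp (\<beta> * t1)"
  define C0 where "C0 = M * K * (1 + t1 * (1 + 3/2 * c * L))"
  define \<eta> where "\<eta> = \<epsilon> / C0"
  have be: "\<beta> \<ge> 0" using Mpos cpos Rpos by (simp add: \<beta>_def)
  have C0: "C0 > 0" using Mpos t1pos cpos L by (simp add: C0_def K_def add_pos_nonneg)
  have eta: "\<eta> > 0" using e C0 by (simp add: \<eta>_def)
  have ev1: "eventually (\<lambda>h. dist (Dq h 0) V0 < \<eta>/2) (at_right 0)"
    using tendstoD[OF Dq0_tendsto, of "\<eta>/2"] eta by simp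
  have ev2: "eventually (\<lambda>h. \<forall>s\<in>{0..t1}. norm (G h s - G0 s) \<le> \<eta>/2) (at_right 0)"
    using G_unif[of "\<eta>/2"] eta by simp
  obtain \<delta>1 where d1: "\<delta>1 > 0" "\<And>h. 0 < h \<Longrightarrow> h < \<delta>1 \<Longrightarrow> dist (Dq h 0) V0 < \<eta>/2 \<and> (\<forall>s\<in>{0..t1}. norm (G h s - G0 s) \<le> \<eta>/2)"
    using eventually_conj[OF ev1 ev2] unfolding eventually_at_right_field by auto
  obtain du where du: "du > 0" "\<forall>a\<in>{0..t2}. \<forall>b\<in>{0..t2}. \<bar>a - b\<bar> < du \<longrightarrow> norm (U a - U b) < \<eta>"
    using U_unif_eps[OF eta] by blast
  define \<delta> where "\<delta> = min (min \<delta>1 \<delta>0) du"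
  have "norm (Dq h t - Dq h' t) \<le> \<epsilon>" if hh: "0 < h" "h < \<delta>" "0 < h'" "h' < \<delta>" and t: "t \<in> {0..t1}" for h h' t
  proof -
    have h1: "0 < h" "h \<le> t2 - t1" and h1': "0 < h'" "h' \<le> t2 - t1" using hh L by (auto simp: \<delta>_def)
    define \<phi> where "\<phi> s = norm (Dq h s - Dq h' s)" for s
    have phic: "continuous_on {0..t1} \<phi>" unfolding \<phi>_def[abs_def]
      by (intro continuous_intros Dq_cont[OF h1] Dq_cont[OF h1'])
    have D0: "norm (Dq h 0 - Dq h' 0) \<le> \<eta>"
    proof -
      have "dist (Dq h 0) V0 < \<eta>/2" "dist (Dq h' 0) V0 < \<eta>/2" using d1 hh by (auto simp: \<delta>_def)
      then show ?thesis using dist_triangle3[of "Dq h 0" "Dq h' 0" V0] by (simp add: dist_norm norm_minus_commute)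
    qed
    have Dlb: "norm (Dl h s - Dl h' s) \<le> (\<eta> + 3/2 * c * L * \<eta>) + 3 * c * R * \<phi> s" if s: "s \<in> {0..t1}" for s
    proof -
      have s0: "0 \<le> s" "s + h \<le> t2" "s + h' \<le> t2" using s h1 h1' by auto
      have cs: "cbound c (kq s)" using cbnd s t12 by auto
      interpret B: bounded_bilinear "Q (kq s)" by (rule Q_bilinear[OF cs])
      let ?a = "Dq h s" and ?b = "Dq h' s" and ?x = "U (s + h)" and ?x' = "U (s + h')"
      have eq: "Dl h s - Dl h' s = (G h s - G h' s) + Q (kq s) (?a - ?b) ?x + Q (kq s) ?b (?x - ?x') + Q (kq s) (U s) (?a - ?b)"
        unfolding Dl_decomp[OF s0(1) h1(1) s0(2)] Dl_decomp[OF s0(1) h1'(1) s0(3)]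
        by (simp add: B.diff_left B.diff_right algebra_simps)
      have nG: "norm (G h s - G h' s) \<le> \<eta>"
      proof -
        have "norm (G h s - G0 s) \<le> \<eta>/2" "norm (G h' s - G0 s) \<le> \<eta>/2" using d1 hh s by (auto simp: \<delta>_def)
        then show ?thesis using norm_triangle_ineq4[of "G h s - G0 s" "G h' s - G0 s"] by (simp add: algebra_simps)
      qed
      have n1: "norm (Q (kq s) (?a - ?b) ?x) \<le> 3/2 * c * \<phi> s * R"
      proof -
        have "norm (Q (kq s) (?a - ?b) ?x) \<le> 3/2 * c * norm (?a - ?b) * norm ?x" by (rule Q_norm[OF cs])
        also have "\<dots> \<le> 3/2 * c * \<phi> s * R"
          using Rbnd[of "s + h"] s0 cpos h1 unfolding \<phi>_def by (intro mult_left_mono) auto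
        finally show ?thesis .
      qed
      have n2: "norm (Q (kq s) ?b (?x - ?x')) \<le> 3/2 * c * L * \<eta>"
      proof -
        have "norm (Q (kq s) ?b (?x - ?x')) \<le> 3/2 * c * norm ?b * norm (?x - ?x')" by (rule Q_norm[OF cs])
        also have "\<dots> \<le> 3/2 * c * L * \<eta>"
        proof (intro mult_mono mult_left_mono)
          show "norm ?b \<le> L" using Lb[of h' s] hh s by (auto simp: \<delta>_def)
          have "\<bar>(s + h) - (s + h')\<bar> < du" using hh by (auto simp: \<delta>_def)
          then show "norm (?x - ?x') \<le> \<eta>" using du(2) s0 h1 h1' by (smt (verit) atLeastAtMost_iff)
        qed (use cpos L in auto)
        finally show ?thesis .
      qed
      have n3: "norm (Q (kq s) (U s) (?a - ?b)) \<le> 3/2 * c * R * \<phi> s"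
      proof -
        have "norm (Q (kq s) (U s) (?a - ?b)) \<le> 3/2 * c * norm (U s) * norm (?a - ?b)" by (rule Q_norm[OF cs])
        also have "\<dots> \<le> 3/2 * c * R * \<phi> s"
          using Rbnd[of s] s0 cpos h1 unfolding \<phi>_def by (intro mult_right_mono mult_left_mono) auto
        finally show ?thesis .
      qed
      have "norm (Dl h s - Dl h' s) \<le> norm (G h s - G h' s) + norm (Q (kq s) (?a - ?b) ?x) + norm (Q (kq s) ?b (?x - ?x')) + norm (Q (kq s) (U s) (?a - ?b))"
        unfolding eq by (intro norm_triangle_le add_right_mono norm_triangle_ineq order_refl)
      also have "\<dots> \<le> \<eta> + 3/2 * c * \<phi> s * R + 3/2 * c * L * \<eta> + 3/2 * c * R * \<phi> s"
        using nG n1 n2 n3 by linarith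
      finally show ?thesis by (simp add: algebra_simps)
    qed
    have ineq: "\<phi> t \<le> (M * \<eta> + M * (\<eta> + 3/2 * c * L * \<eta>) * t1) + \<beta> * integral {0..t} \<phi>" if t: "t \<in> {0..t1}" for t
    proof -
      have t0: "t \<ge> 0" "t \<le> t1" using t by auto
      have "\<phi> t = norm (T t (Dq h 0 - Dq h' 0) + integral {0..t} (\<lambda>s. T (t - s) (Dl h s - Dl h' s)))"
        unfolding \<phi>_def by (subst Dq_diff_formula[OF t h1 h1']) rule
      also have "\<dots> \<le> norm (T t (Dq h 0 - Dq h' 0)) + norm (integral {0..t} (\<lambda>s. T (t - s) (Dl h s - Dl h' s)))"
        by (rule norm_triangle_ineq)
      also have "norm (T t (Dq h 0 - Dq h' 0)) \<le> M * \<eta>"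
      proof -
        have "norm (T t (Dq h 0 - Dq h' 0)) \<le> M * norm (Dq h 0 - Dq h' 0)" using Mbnd[of t] t t12 by auto
        also have "\<dots> \<le> M * \<eta>" using D0 Mpos by (intro mult_left_mono) auto
        finally show ?thesis .
      qed
      also have "norm (integral {0..t} (\<lambda>s. T (t - s) (Dl h s - Dl h' s))) \<le> M * integral {0..t} (\<lambda>s. (\<eta> + 3/2 * c * L * \<eta>) + 3 * c * R * \<phi> s)"
      proof (rule int_term_bound[OF t h1])
        show "continuous_on {0..t1} (\<lambda>s. (\<eta> + 3/2 * c * L * \<eta>) + 3 * c * R * \<phi> s)" by (intro continuous_intros phic)
        show "continuous_on {0..t1} (\<lambda>s. Dl h s - Dl h' s)" by (intro continuous_intros Dl_cont[OF h1] Dl_cont[OF h1'])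
        fix s assume s: "s \<in> {0..t1}"
        show "norm (Dl h s - Dl h' s) \<le> (\<eta> + 3/2 * c * L * \<eta>) + 3 * c * R * \<phi> s" by (rule Dlb[OF s])
      qed
      also have "integral {0..t} (\<lambda>s. (\<eta> + 3/2 * c * L * \<eta>) + 3 * c * R * \<phi> s) = (\<eta> + 3/2 * c * L * \<eta>) * t + 3 * c * R * integral {0..t} \<phi>"
        by (rule integral_affine) (use continuous_on_subset[OF phic] t0 in auto)
      also have "M * \<eta> + M * ((\<eta> + 3/2 * c * L * \<eta>) * t + 3 * c * R * integral {0..t} \<phi>) \<le> (M * \<eta> + M * (\<eta> + 3/2 * c * L * \<eta>) * t1) + \<beta> * integral {0..t} \<phi>"
      proof -
        have "M * (\<eta> + 3/2 * c * L * \<eta>) * t \<le> M * (\<eta> + 3/2 * c * L * \<eta>) * t1"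
          using t0 Mpos cpos L eta by (intro mult_left_mono) auto
        then show ?thesis by (simp add: \<beta>_def algebra_simps)
      qed
      finally show ?thesis by simp
    qed
    have "\<phi> t \<le> (M * \<eta> + M * (\<eta> + 3/2 * c * L * \<eta>) * t1) * exp (\<beta> * t)" by (rule gronwall[OF phic be ineq t])
    also have "\<dots> \<le> (M * \<eta> + M * (\<eta> + 3/2 * c * L * \<eta>) * t1) * K"
      unfolding K_def using t be Mpos eta cpos L t1pos by (intro mult_left_mono) (auto intro!: mult_left_mono add_nonneg_nonneg mult_nonneg_nonneg)
    also have "\<dots> = C0 * \<eta>" by (simp add: C0_def algebra_simps)
    also have "\<dots> = \<epsilon>" using C0 by (simp add: \<eta>_def)
    finally show ?thesis by (simp add: \<phi>_def)
  qed
  moreover have "\<delta> > 0" using d1 L du by (simp add: \<delta>_def)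
  ultimately show ?thesis by blast
qed

end


definition hs :: "nat \<Rightarrow> real" where "hs m = 1 / (real m + 1)"

lemma hs_pos: "hs m > 0" by (simp add: hs_def)

lemma hs_small: "\<delta> > 0 \<Longrightarrow> \<exists>N. \<forall>m\<ge>N. hs m < \<delta>"
proof -
  assume d: "\<delta> > 0"
  obtain N :: nat where N: "1 / \<delta> < real N" using reals_Archimedean2 by blast
  have "hs m < \<delta>" if "m \<ge> N" for m
  proof -
    have "1 / \<delta> < real m + 1" using N that by linarith
    then have "1 < \<delta> * (real m + 1)" using d by (simp add: field_simps)
    then show ?thesis using d by (simp add: hs_def field_simps)
  qed
  then show ?thesis by blast
qed

context win
begin

definition v :: "real \<Rightarrow> l1" where "v t = lim (\<lambda>m. Dq (hs m) t)"

lemma v_lim: assumes t: "t \<in> {0..t1}" shows "(\<lambda>m. Dq (hs m) t) \<longlonglongrightarrow> v t"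
proof -
  have "Cauchy (\<lambda>m. Dq (hs m) t)"
  proof (rule metric_CauchyI)
    fix e :: real assume e: "e > 0"
    obtain \<delta> where d: "\<delta> > 0" "\<forall>h h'. 0 < h \<and> h < \<delta> \<and> 0 < h' \<and> h' < \<delta> \<longrightarrow> (\<forall>t\<in>{0..t1}. norm (Dq h t - Dq h' t) \<le> e/2)"
      using Dq_cauchy[of "e/2"] e by auto
    obtain N where N: "\<forall>m\<ge>N. hs m < \<delta>" using hs_small[OF d(1)] by blast
    show "\<exists>M. \<forall>m\<ge>M. \<forall>n\<ge>M. dist (Dq (hs m) t) (Dq (hs n) t) < e"
    proof (intro exI allI impI)
      fix m n assume "m \<ge> N" "n \<ge> N"
      then have "norm (Dq (hs m) t - Dq (hs n) t) \<le> e/2" using d N t hs_pos by blast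
      then show "dist (Dq (hs m) t) (Dq (hs n) t) < e" using e by (simp add: dist_norm)
    qed
  qed
  then show ?thesis unfolding v_def by (simp add: Cauchy_convergent_iff convergent_LIMSEQ_iff)
qed

lemma v_unif:
  assumes e: "\<epsilon> > 0"
  shows "\<exists>\<delta>>0. \<forall>h. 0 < h \<and> h < \<delta> \<longrightarrow> (\<forall>t\<in>{0..t1}. norm (Dq h t - v t) \<le> \<epsilon>)"
proof -
  obtain \<delta> where d: "\<delta> > 0" "\<forall>h h'. 0 < h \<and> h < \<delta> \<and> 0 < h' \<and> h' < \<delta> \<longrightarrow> (\<forall>t\<in>{0..t1}. norm (Dq h t - Dq h' t) \<le> \<epsilon>)"
    using Dq_cauchy[OF e] by auto
  obtain N where N: "\<forall>m\<ge>N. hs m < \<delta>" using hs_small[OF d(1)] by blast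
  have "norm (Dq h t - v t) \<le> \<epsilon>" if h: "0 < h" "h < \<delta>" and t: "t \<in> {0..t1}" for h t
  proof -
    have "(\<lambda>m. norm (Dq h t - Dq (hs m) t)) \<longlonglongrightarrow> norm (Dq h t - v t)"
      by (intro tendsto_intros v_lim[OF t])
    moreover have "\<exists>N. \<forall>m\<ge>N. norm (Dq h t - Dq (hs m) t) \<le> \<epsilon>"
      using d N h t hs_pos by blast
    ultimately show ?thesis by (rule LIMSEQ_le_const2)
  qed
  then show ?thesis using d by blast
qed

lemma v_right: assumes t: "t \<in> {0..t1}" shows "((\<lambda>h. Dq h t) \<longlongrightarrow> v t) (at_right 0)"
proof (rule tendstoI)
  fix e :: real assume e: "e > 0"
  obtain \<delta> where d: "\<delta> > 0" "\<forall>h. 0 < h \<and> h < \<delta> \<longrightarrow> (\<forall>t\<in>{0..t1}. norm (Dq h t - v t) \<le> e/2)"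
    using v_unif[of "e/2"] e by auto
  show "eventually (\<lambda>h. dist (Dq h t) (v t) < e) (at_right 0)"
    unfolding eventually_at_right_field
    by (rule exI[of _ \<delta>]) (use d t e in \<open>force simp: dist_norm\<close>)
qed

lemma v_cont: "continuous_on {0..t1} v"
  unfolding continuous_on_iff
proof (intro ballI allI impI)
  fix x e :: real assume x: "x \<in> {0..t1}" and e: "e > 0"
  obtain \<delta> where d: "\<delta> > 0" "\<forall>h. 0 < h \<and> h < \<delta> \<longrightarrow> (\<forall>t\<in>{0..t1}. norm (Dq h t - v t) \<le> e/4)"
    using v_unif[of "e/4"] e by auto
  define h where "h = min \<delta> (t2 - t1) / 2"
  have h: "0 < h" "h < \<delta>" "h \<le> t2 - t1" using d t12 by (auto simp: h_def)
  obtain d' where d': "d' > 0" "\<forall>x'\<in>{0..t1}. dist x' x < d' \<longrightarrow> dist (Dq h x') (Dq h x) < e/4"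
    using Dq_cont[OF h(1,3)] x e unfolding continuous_on_iff by (metis zero_less_divide_iff zero_less_numeral)
  show "\<exists>d>0. \<forall>x'\<in>{0..t1}. dist x' x < d \<longrightarrow> dist (v x') (v x) < e"
  proof (intro exI conjI ballI impI)
    fix x' assume x': "x' \<in> {0..t1}" "dist x' x < d'"
    have a: "norm (Dq h x' - v x') \<le> e/4" "norm (Dq h x - v x) \<le> e/4" using d h x x' by auto
    have b: "norm (Dq h x' - Dq h x) < e/4" using d' x' by (simp add: dist_norm)
    have eq: "v x' - v x = (v x' - Dq h x') + (Dq h x' - Dq h x) + (Dq h x - v x)" by simp
    have "norm (v x' - v x) \<le> norm (v x' - Dq h x') + norm (Dq h x' - Dq h x) + norm (Dq h x - v x)"
      unfolding eq by (rule norm_triangle_le, rule add_right_mono, rule norm_triangle_ineq)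
    then have "norm (v x' - v x) \<le> norm (Dq h x' - v x') + norm (Dq h x' - Dq h x) + norm (Dq h x - v x)"
      by (simp add: norm_minus_commute)
    then have "norm (v x' - v x) < e" using a b e by linarith
    then show "dist (v x') (v x) < e" by (simp add: dist_norm)
  qed (use d' in auto)
qed

lemma deriv_U:
  assumes t: "t \<in> {0<..<t1}"
  shows "((\<lambda>h. (1/h) *\<^sub>R (U (t + h) - U t)) \<longlongrightarrow> v t) (at 0)"
proof (rule filterlim_split_at)
  show "((\<lambda>h. (1/h) *\<^sub>R (U (t + h) - U t)) \<longlongrightarrow> v t) (at_right 0)"
    using v_right[of t] t by (simp add: Dq_def)
  show "((\<lambda>h. (1/h) *\<^sub>R (U (t + h) - U t)) \<longlongrightarrow> v t) (at_left 0)"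
    unfolding filterlim_at_left_to_right
  proof (rule tendstoI)
    fix e :: real assume e: "e > 0"
    obtain \<delta> where d: "\<delta> > 0" "\<forall>h. 0 < h \<and> h < \<delta> \<longrightarrow> (\<forall>t\<in>{0..t1}. norm (Dq h t - v t) \<le> e/4)"
      using v_unif[of "e/4"] e by auto
    obtain d' where d': "d' > 0" "\<forall>x'\<in>{0..t1}. dist x' t < d' \<longrightarrow> dist (v x') (v t) < e/4"
      using v_cont t e unfolding continuous_on_iff by (metis atLeastAtMost_iff greaterThanLessThan_iff less_eq_real_def zero_less_divide_iff zero_less_numeral)
    show "eventually (\<lambda>h. dist ((1 / - h) *\<^sub>R (U (t + - h) - U t)) (v t) < e) (at_right (- 0))"
      unfolding minus_zero eventually_at_right_field
    proof (intro exI[of _ "min t (min \<delta> d')"] conjI allI impI)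
      show "0 < min t (min \<delta> d')" using t d d' by auto
      fix h :: real assume h: "0 < h" "h < min t (min \<delta> d')"
      have th: "t - h \<in> {0..t1}" using h t by auto
      have eq: "(1 / - h) *\<^sub>R (U (t + - h) - U t) = Dq h (t - h)"
        using h by (simp add: Dq_def algebra_simps)
      have a: "norm (Dq h (t - h) - v (t - h)) \<le> e/4" using d h th by auto
      have b: "dist (v (t - h)) (v t) < e/4" using d' th h by (auto simp: dist_real_def)
      have "norm (Dq h (t - h) - v t) \<le> norm (Dq h (t - h) - v (t - h)) + norm (v (t - h) - v t)"
        using norm_triangle_ineq[of "Dq h (t - h) - v (t - h)" "v (t - h) - v t"] by simp
      then show "dist ((1 / - h) *\<^sub>R (U (t + - h) - U t)) (v t) < e"
        unfolding eq using a b e by (simp add: dist_norm)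
    qed
  qed
qed

lemma gen_U:
  assumes t: "t \<in> {0..t1}"
  shows "((\<lambda>h. (1/h) *\<^sub>R (T h (U t) - U t)) \<longlongrightarrow> v t - F t) (at_right 0)"
proof -
  have a: "((\<lambda>h. (1/h) *\<^sub>R integral {t..t+h} (\<lambda>s. T (t + h - s) (F s))) \<longlongrightarrow> F t) (at_right 0)"
    by (rule T_avg[where \<delta>="t2 - t"]) (use t t12 in \<open>auto intro: continuous_on_subset[OF F_cont2]\<close>)
  have "((\<lambda>h. Dq h t - (1/h) *\<^sub>R integral {t..t+h} (\<lambda>s. T (t + h - s) (F s))) \<longlongrightarrow> v t - F t) (at_right 0)"
    by (rule tendsto_diff[OF v_right[OF t] a])
  moreover have "eventually (\<lambda>h. Dq h t - (1/h) *\<^sub>R integral {t..t+h} (\<lambda>s. T (t + h - s) (F s)) = (1/h) *\<^sub>R (T h (U t) - U t)) (at_right 0)"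
    unfolding eventually_at_right_field
  proof (intro exI[of _ "t2 - t1"] conjI allI impI)
    show "0 < t2 - t1" using t12 by simp
    fix h :: real assume h: "0 < h" "h < t2 - t1"
    have "U (t + h) = T h (U t) + integral {t..t+h} (\<lambda>s. T (t + h - s) (F s))"
      by (rule U_shift) (use t h t2_sub in auto)
    then show "Dq h t - (1/h) *\<^sub>R integral {t..t+h} (\<lambda>s. T (t + h - s) (F s)) = (1/h) *\<^sub>R (T h (U t) - U t)"
      by (simp add: Dq_def algebra_simps)
  qed
  ultimately show ?thesis by (simp add: tendsto_cong)
qed

end


context mainloc
begin

definition der :: "real \<Rightarrow> l1" where "der t = Lim (at_right 0) (\<lambda>h. Dq h t)"
definition u' :: "real \<Rightarrow> nat \<Rightarrow> real" where "u' t = ofl1 (der t)"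

lemma window:
  assumes t: "t \<in> Dm" "t > 0"
  obtains t1 t2 c cd M R where "win w S P k kd Tend u0 g0 u tmax t1 t2 c cd M R" "t < t1"
proof -
  obtain t1 where t1: "t < t1" "t1 \<in> Dm" using Dm_above[OF t(1)] by blast
  obtain t2 where t2: "t1 < t2" "t2 \<in> Dm" using Dm_above[OF t1(2)] by blast
  have t2p: "t2 > 0" using t t1 t2 by auto
  obtain c where c: "c > 0" "\<forall>s\<in>{0..t2}. cbound c (kq s)" using kq_bound[OF t2(2) t2p] by blast
  obtain cd where cd: "cd > 0" "\<forall>s\<in>{0..t2}. cbound cd (kdq s)" using kdq_bound[OF t2(2) t2p] by blast
  obtain M where M: "M > 0" "\<forall>t\<in>{0..t2}. \<forall>x. norm (T t x) \<le> M * norm x" using T_bound[of t2] t2p by auto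
  have "compact (U ` {0..t2})"
    by (rule compact_continuous_image[OF continuous_on_subset[OF U_cont Dm_ivs[OF t2(2)]]]) simp
  then obtain R0 where R0: "\<forall>y\<in>U ` {0..t2}. norm y \<le> R0" using compact_imp_bounded bounded_iff by metis
  define R where "R = max R0 1"
  have R: "R > 0" "\<And>s. s \<in> {0..t2} \<Longrightarrow> norm (U s) \<le> R" using R0 by (auto simp: R_def intro: le_max_iff_disj[THEN iffD2])
  have "win w S P k kd Tend u0 g0 u tmax t1 t2 c cd M R"
    by unfold_locales (use t t1 t2 c cd M R in auto)
  then show ?thesis using that t1 by blast
qed

lemma main_result:
  assumes t: "0 < t" "ereal t < tmax"
  shows "u' t \<in> lw w"
    and "lw_tendsto w (\<lambda>h n. (u (t + h) n - u t n) / h) (u' t) (at 0)"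
    and "lw_tendsto w u' (u' t) (at t within {s. 0 < s \<and> ereal s < tmax})"
    and "(u t, (\<lambda>n. u' t n - opK k t (u t) n)) \<in> P"
proof -
  have tD: "t \<in> Dm" using t by (simp add: Dm_def)
  obtain t1 t2 c cd M R where W: "win w S P k kd Tend u0 g0 u tmax t1 t2 c cd M R" and tt1: "t < t1"
    using window[OF tD t(1)] by blast
  interpret W: win w S P k kd Tend u0 g0 u tmax t1 t2 c cd M R by (rule W)
  have derv: "der s = W.v s" if s: "s \<in> {0..t1}" for s
    unfolding der_def by (rule tendsto_Lim[OF trivial_limit_at_right_real W.v_right[OF s]])
  have tin: "t \<in> {0<..<t1}" using t tt1 by auto
  have tu': "tol1 (u' t) = W.v t" using derv[of t] tin by (simp add: u'_def)
  show "u' t \<in> lw w" by (simp add: u'_def)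
  show "lw_tendsto w (\<lambda>h n. (u (t + h) n - u t n) / h) (u' t) (at 0)"
  proof -
    have ev: "eventually (\<lambda>h. t + h \<in> Dm) (at 0)"
    proof -
      have "eventually (\<lambda>h. h \<in> {-t<..<t1 - t}) (at (0::real))"
        by (rule eventually_at_in_open') (use tin in auto)
      then show ?thesis by eventually_elim (use W.t2_sub W.t12 Dm_iv[OF W.t2D] in auto)
    qed
    have ev2: "eventually (\<lambda>h. (\<lambda>n. (u (t + h) n - u t n) / h) \<in> lw w) (at 0)"
      using ev by eventually_elim (rule lw_diffq[OF u_lw u_lw[OF tD]])
    have "((\<lambda>h. tol1 (\<lambda>n. (u (t + h) n - u t n) / h)) \<longlongrightarrow> tol1 (u' t)) (at 0)"
    proof -
      have "((\<lambda>h. (1/h) *\<^sub>R (U (t + h) - U t)) \<longlongrightarrow> tol1 (u' t)) (at 0)"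
        unfolding tu' by (rule W.deriv_U[OF tin])
      moreover have "eventually (\<lambda>h. (1/h) *\<^sub>R (U (t + h) - U t) = tol1 (\<lambda>n. (u (t + h) n - u t n) / h)) (at 0)"
        using ev by eventually_elim (simp add: tol1_diffq u_lw tD U_def)
      ultimately show ?thesis by (simp add: tendsto_cong)
    qed
    then show ?thesis using lw_tendsto_iff[OF ev2 ofl1_lw[of "der t"]] by (simp add: u'_def)
  qed
  show "lw_tendsto w u' (u' t) (at t within {s. 0 < s \<and> ereal s < tmax})"
  proof -
    let ?X = "{s. 0 < s \<and> ereal s < tmax}"
    have ev: "eventually (\<lambda>s. u' s \<in> lw w) (at t within ?X)" by (simp add: u'_def)
    have vc: "(W.v \<longlongrightarrow> W.v t) (at t)"
    proof -
      have "(W.v \<longlongrightarrow> W.v t) (at t within {0..t1})" using W.v_cont tin unfolding continuous_on_def by auto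
      moreover have "at t within {0..t1} = at t" using tin by (intro at_within_Icc_at) auto
      ultimately show ?thesis by simp
    qed
    have "((\<lambda>s. tol1 (u' s)) \<longlongrightarrow> tol1 (u' t)) (at t within ?X)"
    proof -
      have "(W.v \<longlongrightarrow> tol1 (u' t)) (at t within ?X)" unfolding tu' by (rule tendsto_within_subset[OF vc]) simp
      moreover have "eventually (\<lambda>s. W.v s = tol1 (u' s)) (at t within ?X)"
      proof -
        have e1: "eventually (\<lambda>s. s < t1) (at t within ?X)"
          using order_tendstoD(2)[OF tendsto_ident_at, of t t1] tin by auto
        have e2: "eventually (\<lambda>s. s \<in> ?X) (at t within ?X)" by (rule ev_within) simp
        show ?thesis using e1 e2 by eventually_elim (simp add: u'_def derv)
      qed
      ultimately show ?thesis by (simp add: tendsto_cong)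
    qed
    then show ?thesis using lw_tendsto_iff[OF ev ofl1_lw[of "der t"]] by (simp add: u'_def[abs_def])
  qed
  show "(u t, (\<lambda>n. u' t n - opK k t (u t) n)) \<in> P"
  proof -
    have g: "(\<lambda>n. u' t n - opK k t (u t) n) \<in> lw w" by (rule lw_diff) (simp_all add: u'_def opK_lw[OF tD])
    have "tol1 (\<lambda>n. u' t n - opK k t (u t) n) = W.v t - F t"
      using tol1_diff[OF ofl1_lw opK_lw[OF tD]] tu' F_tol1[OF tD] by (simp add: u'_def)
    moreover have "((\<lambda>h. (1/h) *\<^sub>R (T h (tol1 (u t)) - tol1 (u t))) \<longlongrightarrow> W.v t - F t) (at_right 0)"
      using W.gen_U[of t] tin by (simp add: U_def)
    ultimately show ?thesis using generator[OF u_lw[OF tD] g] by simp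
  qed
qed

lemma classical:
  "(\<forall>t. 0 \<le> t \<and> ereal t < tmax \<longrightarrow> u t \<in> lw w) \<and>
   (\<forall>t0. 0 \<le> t0 \<and> ereal t0 < tmax \<longrightarrow> lw_tendsto w u (u t0) (at t0 within {t. 0 \<le> t \<and> ereal t < tmax})) \<and>
   (\<exists>u' :: real \<Rightarrow> nat \<Rightarrow> real.
      (\<forall>t. 0 < t \<and> ereal t < tmax \<longrightarrow>
          u' t \<in> lw w \<and>
          lw_tendsto w (\<lambda>h n. (u (t + h) n - u t n) / h) (u' t) (at 0) \<and>
          lw_tendsto w u' (u' t) (at t within {s. 0 < s \<and> ereal s < tmax}) \<and>
          u t \<in> {f. \<exists>g. (f, g) \<in> P} \<and>
          (u t, (\<lambda>n. u' t n - opK k t (u t) n)) \<in> P)) \<and>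
   u 0 = u0"
proof (intro conjI allI impI)
  show "u t \<in> lw w" if "0 \<le> t \<and> ereal t < tmax" for t using u_lw that by (simp add: Dm_def)
  show "lw_tendsto w u (u t0) (at t0 within {t. 0 \<le> t \<and> ereal t < tmax})" if "0 \<le> t0 \<and> ereal t0 < tmax" for t0
    using u_cont that by (simp add: Dm_def)
  show "u 0 = u0" by (rule u_0)
  show "\<exists>u' :: real \<Rightarrow> nat \<Rightarrow> real. \<forall>t. 0 < t \<and> ereal t < tmax \<longrightarrow>
          u' t \<in> lw w \<and>
          lw_tendsto w (\<lambda>h n. (u (t + h) n - u t n) / h) (u' t) (at 0) \<and>
          lw_tendsto w u' (u' t) (at t within {s. 0 < s \<and> ereal s < tmax}) \<and>
          u t \<in> {f. \<exists>g. (f, g) \<in> P} \<and>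
          (u t, (\<lambda>n. u' t n - opK k t (u t) n)) \<in> P"
    using main_result by blast
qed

end


theorem theorem4p14:
  fixes T :: ereal and a w :: "nat \<Rightarrow> real" and b :: "nat \<Rightarrow> nat \<Rightarrow> real"
    and k kd :: "nat \<Rightarrow> nat \<Rightarrow> real \<Rightarrow> real" and \<kappa> :: real
    and S :: "real \<Rightarrow> (nat \<Rightarrow> real) \<Rightarrow> nat \<Rightarrow> real"
    and u0 :: "nat \<Rightarrow> real" and u :: "real \<Rightarrow> nat \<Rightarrow> real" and tmax :: ereal
  assumes T_pos: "0 < T"
    and a_nonneg: "\<And>n. n \<ge> 1 \<Longrightarrow> a n \<ge> 0"
    and b_nonneg: "\<And>n j. n \<ge> 1 \<Longrightarrow> j \<ge> 1 \<Longrightarrow> b n j \<ge> 0"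
    and b_zero: "\<And>n j. n \<ge> 1 \<Longrightarrow> j \<ge> 1 \<Longrightarrow> j \<le> n \<Longrightarrow> b n j = 0"
    and k_cont: "\<And>n j. n \<ge> 1 \<Longrightarrow> j \<ge> 1 \<Longrightarrow> continuous_on {t. 0 \<le> t \<and> ereal t < T} (k n j)"
    and k_nonneg: "\<And>n j t. n \<ge> 1 \<Longrightarrow> j \<ge> 1 \<Longrightarrow> 0 \<le> t \<Longrightarrow> ereal t < T \<Longrightarrow> k n j t \<ge> 0"
    and k_sym: "\<And>n j t. n \<ge> 1 \<Longrightarrow> j \<ge> 1 \<Longrightarrow> 0 \<le> t \<Longrightarrow> ereal t < T \<Longrightarrow> k n j t = k j n t"
    and w_ge: "\<And>n. n \<ge> 1 \<Longrightarrow> w n \<ge> real n"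
    and w_mono: "\<And>n m. 1 \<le> n \<Longrightarrow> n \<le> m \<Longrightarrow> w n \<le> w m"
    and kappa: "0 < \<kappa>" "\<kappa> \<le> 1"
    and w_b: "\<And>j. j \<ge> 2 \<Longrightarrow> (\<Sum>n\<in>{1..<j}. w n * b n j) \<le> \<kappa> * w j"
    and CI: "\<And>t'. 0 < t' \<Longrightarrow> ereal t' < T \<Longrightarrow> \<exists>c>0. \<forall>n\<ge>1. \<forall>j\<ge>1. \<forall>t\<in>{0..t'}.
               k n j t \<le> c * w n * w j / w (n + j)"
    and k_deriv: "\<And>n j t. n \<ge> 1 \<Longrightarrow> j \<ge> 1 \<Longrightarrow> 0 \<le> t \<Longrightarrow> ereal t < T \<Longrightarrow>
               (k n j has_real_derivative kd n j t) (at t within {s. 0 \<le> s \<and> ereal s < T})"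
    and kd_cont: "\<And>n j. n \<ge> 1 \<Longrightarrow> j \<ge> 1 \<Longrightarrow> continuous_on {t. 0 \<le> t \<and> ereal t < T} (kd n j)"
    and kd_bound: "\<And>t'. 0 < t' \<Longrightarrow> ereal t' < T \<Longrightarrow> \<exists>c>0. \<forall>n\<ge>1. \<forall>j\<ge>1. \<forall>t\<in>{0..t'}.
               \<bar>kd n j t\<bar> \<le> c * w n * w j / w (n + j)"
    and S_gen: "C0_semigroup_gen w S (graphG w a b)"
    and u0_dom: "u0 \<in> domG w a b"
    and u0_nonneg: "\<And>n. u0 n \<ge> 0"
    and tmax_pos: "0 < tmax" and tmax_le: "tmax \<le> T"
    and u_mild: "mild_solution w S k u0 tmax u"
    and u_maximal: "\<And>t1 v. t1 \<le> T \<Longrightarrow> mild_solution w S k u0 t1 v \<Longrightarrow> t1 \<le> tmax"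
  shows "classical_solution w a b k u0 tmax u"
proof -
  have wg: "wgt w"
  proof
    fix n :: nat assume n: "n \<ge> 1"
    then have "real n \<ge> 1" by simp
    then show "w n \<ge> 1" using w_ge[OF n] by linarith
  qed
  obtain g0 where g0: "(u0, g0) \<in> graphG w a b" using u0_dom by (auto simp: domG_def)
  have u0lw: "u0 \<in> lw w" and g0lw: "g0 \<in> lw w" using g0 by (auto simp: graphG_def)
  interpret M: mainloc w S "graphG w a b" k kd T u0 g0 u tmax
  proof (rule mainloc.intro)
    show "sgrp w S (graphG w a b)" by (rule sgrp.intro[OF wg]) (unfold_locales, rule S_gen)
    show "wgtm w" by (rule wgtm.intro[OF wg]) (unfold_locales, rule w_mono)
    show "mainloc_axioms w S (graphG w a b) k kd T u0 g0 u tmax"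
      by unfold_locales (use k_cont k_nonneg CI k_deriv kd_cont kd_bound tmax_pos tmax_le u_mild g0 u0lw g0lw in auto)
  qed
  show ?thesis using M.classical unfolding classical_solution_def domG_def by blast
qed


end
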